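(* Let $X$ be a Wiener--Weierstra\ss\ bridge with $H=1/2$ (so $W$ is a standard Brownian motion and $\kappa$ is H\"older continuous with some exponent $\tau>1/2$), and parameters $\alpha\in(0,1)$, $b\in\{2,3,\dots\}$ with $\alpha^2b=1$. Then $\mathbb P$-a.s., for all $t\in(0,1]$, $$\lim_{n\to\infty}\frac1n\sum_{k=0}^{\lfloor tb^n\rfloor-1}\big(X((k+1)b^{-n})-X(kb^{-n})\big)^2=t .$$ In particular, $\mathbb P$-a.s. the $p$-th variation $\langle X\rangle^{(p)}_1$ is infinite for every $p\le2$ and zero for every $p>2$.
   Context: Let $W=(W(t))_{t\ge0}$ be a fractional Brownian motion with Hurst parameter $H\in(0,1)$. Let $\kappa:[0,1]\to[0,1]$ be a deterministic function with $\kappa(0)=0$, $\kappa(1)=1$ that is H\"older continuous with some exponent $\tau\in(H,1]$. The fractional Brownian bridge is $B(t):=W(t)-\kappa(t)W(1)$, $t\in[0,1]$. For $x\ge0$, $\{x\}$ denotes the fractional part of $x$. For $\alpha\in(0,1)$, $b\in\{2,3,\dots\}$, the fractional Wiener--Weierstra\ss\ bridge is $X(t):=\sum_{n=0}^\infty\alpha^nB(\{b^nt\})$, $0\le t\le1$. For a function $f:[0,1]\to\mathbb R$ and $p>0$, the $p$-th variation along the $b$-adic partitions is $\langle f\rangle^{(p)}_t:=\lim_{n\to\infty}\sum_{k=0}^{\lfloor tb^n\rfloor-1}|f((k+1)b^{-n})-f(kb^{-n})|^p$, $t\in[0,1]$, provided the limit exists (possibly $+\infty$). *)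

theory Defs
  imports "HOL-Probability.Probability"
begin

definition brownian_motion :: "'a measure \<Rightarrow> (real \<Rightarrow> 'a \<Rightarrow> real) \<Rightarrow> bool" where
  "brownian_motion M W \<longleftrightarrow>
     prob_space M \<and>
     (\<forall>t\<ge>0. W t \<in> borel_measurable M) \<and>
     (\<forall>\<omega>\<in>space M. W 0 \<omega> = 0) \<and>
     (\<forall>\<omega>\<in>space M. continuous_on {0..} (\<lambda>t. W t \<omega>)) \<and>
     (\<forall>s t. 0 \<le> s \<and> s < t \<longrightarrow>
        distributed M lborel (\<lambda>\<omega>. W t \<omega> - W s \<omega>) (normal_density 0 (sqrt (t - s)))) \<and>
     (\<forall>(n::nat) (u::nat \<Rightarrow> real). 0 \<le> u 0 \<and> (\<forall>i<n. u i < u (Suc i)) \<longrightarrow>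
        prob_space.indep_vars M (\<lambda>_. borel) (\<lambda>i \<omega>. W (u (Suc i)) \<omega> - W (u i) \<omega>) {..<n})"

definition hoelder_on01 :: "real \<Rightarrow> (real \<Rightarrow> real) \<Rightarrow> bool" where
  "hoelder_on01 \<tau> f \<longleftrightarrow> (\<exists>C. \<forall>s\<in>{0..1}. \<forall>t\<in>{0..1}. \<bar>f s - f t\<bar> \<le> C * \<bar>s - t\<bar> powr \<tau>)"

definition bridge :: "(real \<Rightarrow> 'a \<Rightarrow> real) \<Rightarrow> (real \<Rightarrow> real) \<Rightarrow> real \<Rightarrow> 'a \<Rightarrow> real" where
  "bridge W \<kappa> t \<omega> = W t \<omega> - \<kappa> t * W 1 \<omega>"

definition ww_bridge :: "(real \<Rightarrow> 'a \<Rightarrow> real) \<Rightarrow> (real \<Rightarrow> real) \<Rightarrow> real \<Rightarrow> nat \<Rightarrow> real \<Rightarrow> 'a \<Rightarrow> real" where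
  "ww_bridge W \<kappa> \<alpha> b t \<omega> = (\<Sum>n. \<alpha> ^ n * bridge W \<kappa> (frac (real b ^ n * t)) \<omega>)"

definition pvar_sum :: "(real \<Rightarrow> real) \<Rightarrow> nat \<Rightarrow> real \<Rightarrow> real \<Rightarrow> nat \<Rightarrow> real" where
  "pvar_sum f b p t n =
     (\<Sum>k<nat \<lfloor>t * real b ^ n\<rfloor>. \<bar>f ((real k + 1) / real b ^ n) - f (real k / real b ^ n)\<bar> powr p)"

definition has_pvariation :: "(real \<Rightarrow> real) \<Rightarrow> nat \<Rightarrow> real \<Rightarrow> real \<Rightarrow> ereal \<Rightarrow> bool" where
  "has_pvariation f b p t L \<longleftrightarrow> ((\<lambda>n. ereal (pvar_sum f b p t n)) \<longlongrightarrow> L) sequentially"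

end

theory Submission
  imports Defs "HOL-Number_Theory.Cong"
begin

lemma (in prob_space) normal_moments:
  assumes Z: "distributed M lborel Z (normal_density 0 \<sigma>)" and s: "0 < \<sigma>"
  shows "integrable M (\<lambda>\<omega>. Z \<omega> ^ k)"
    and "expectation (\<lambda>\<omega>. Z \<omega> ^ 2) = \<sigma>^2"
    and "expectation (\<lambda>\<omega>. Z \<omega> ^ 4) = 3 * \<sigma>^4"
proof -
  have nn: "\<And>x. 0 \<le> normal_density 0 \<sigma> x" by (simp add: normal_density_nonneg)
  show "integrable M (\<lambda>\<omega>. Z \<omega> ^ k)"
  proof -
    have "integrable lborel (\<lambda>x. normal_density 0 \<sigma> x * (x - 0)^k)" using s by (rule integrable_normal_moment)
    then show ?thesis using distributed_integrable[OF Z, of "\<lambda>x. x ^ k"] nn by simp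
  qed
  have "expectation (\<lambda>\<omega>. Z \<omega> ^ (2*1)) = (\<integral>x. normal_density 0 \<sigma> x * x ^ (2*1) \<partial>lborel)"
    using distributed_integral[OF Z, of "\<lambda>x. x ^ (2*1)"] nn by simp
  also have "\<dots> = fact (2 * 1) / ((2 / \<sigma>\<^sup>2)^1 * fact 1)"
    using integral_normal_moment_even[of \<sigma> 0 1] s by simp
  finally show "expectation (\<lambda>\<omega>. Z \<omega> ^ 2) = \<sigma>^2" using s by simp
  have "expectation (\<lambda>\<omega>. Z \<omega> ^ (2*2)) = (\<integral>x. normal_density 0 \<sigma> x * x ^ (2*2) \<partial>lborel)"
    using distributed_integral[OF Z, of "\<lambda>x. x ^ (2*2)"] nn by simp
  also have "\<dots> = fact (2 * 2) / ((2 / \<sigma>\<^sup>2)^2 * fact 2)"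
    using integral_normal_moment_even[of \<sigma> 0 2] s by simp
  finally show "expectation (\<lambda>\<omega>. Z \<omega> ^ 4) = 3 * \<sigma>^4" using s
    by (simp add: fact_numeral power2_eq_square field_simps eval_nat_numeral)
qed

locale gfam = prob_space M for M :: "'a measure" +
  fixes \<xi> :: "nat \<Rightarrow> 'a \<Rightarrow> real" and I :: "nat set" and s :: real
  assumes fin: "finite I" and ind: "indep_vars (\<lambda>_. borel) \<xi> I"
    and nd: "\<And>i. i \<in> I \<Longrightarrow> distributed M lborel (\<xi> i) (normal_density 0 s)"
    and spos: "0 < s"
begin

definition lin :: "(nat \<Rightarrow> real) \<Rightarrow> 'a \<Rightarrow> real" where
  "lin c \<omega> = (\<Sum>i\<in>I. c i * \<xi> i \<omega>)"

lemma xi_meas[measurable]: "i \<in> I \<Longrightarrow> \<xi> i \<in> borel_measurable M"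
  using nd[of i] distributed_measurable[of M lborel "\<xi> i"] by simp

lemma lin_meas[measurable]: "lin c \<in> borel_measurable M"
  unfolding lin_def[abs_def] by (intro borel_measurable_sum borel_measurable_times) auto

lemma lin_cases:
  "(\<forall>\<omega>. lin c \<omega> = 0 \<and> (\<Sum>i\<in>I. (c i)^2) = 0) \<or>
   (0 < (\<Sum>i\<in>I. (c i)^2) \<and> distributed M lborel (lin c) (normal_density 0 (s * sqrt (\<Sum>i\<in>I. (c i)^2))))"
proof (cases "{i\<in>I. c i \<noteq> 0} = {}")
  case True
  then have "\<And>i. i \<in> I \<Longrightarrow> c i = 0" by auto
  then show ?thesis by (auto simp: lin_def)
next
  case False
  define J where "J = {i\<in>I. c i \<noteq> 0}"
  have J: "finite J" "J \<noteq> {}" "J \<subseteq> I" using False fin by (auto simp: J_def)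
  have eqlin: "lin c = (\<lambda>\<omega>. \<Sum>i\<in>J. c i * \<xi> i \<omega>)"
    by (auto simp: lin_def J_def intro!: sum.mono_neutral_right fin ext)
  have eqn: "(\<Sum>i\<in>I. (c i)^2) = (\<Sum>i\<in>J. (c i)^2)"
    by (auto simp: J_def intro!: sum.mono_neutral_right fin)
  have indJ: "indep_vars (\<lambda>_. borel) (\<lambda>i \<omega>. c i * \<xi> i \<omega>) J"
    using indep_vars_compose2[OF indep_vars_subset[OF ind J(3)], of "\<lambda>i x. c i * x" "\<lambda>_. borel"]
    by auto
  have dJ: "distributed M lborel (\<lambda>\<omega>. c i * \<xi> i \<omega>) (normal_density 0 (\<bar>c i\<bar> * s))" if "i \<in> J" for i
    using normal_density_affine[OF nd[of i] spos, of "c i" 0] that J by (auto simp: J_def)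
  have "distributed M lborel (\<lambda>\<omega>. \<Sum>i\<in>J. c i * \<xi> i \<omega>)
          (normal_density (\<Sum>i\<in>J. 0) (sqrt (\<Sum>i\<in>J. (\<bar>c i\<bar> * s)\<^sup>2)))"
    using J dJ spos by (intro sum_indep_normal indJ) (auto simp: J_def)
  moreover have "sqrt (\<Sum>i\<in>J. (\<bar>c i\<bar> * s)\<^sup>2) = s * sqrt (\<Sum>i\<in>J. (c i)^2)"
    using spos by (simp add: power_mult_distrib sum_distrib_right[symmetric] real_sqrt_mult)
  moreover have "0 < (\<Sum>i\<in>J. (c i)^2)"
    using J by (intro sum_pos) (auto simp: J_def)
  ultimately show ?thesis using eqlin eqn by simp
qed

lemma lin_int: "integrable M (\<lambda>\<omega>. lin c \<omega> ^ k)"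
  using lin_cases[of c]
proof
  assume "\<forall>\<omega>. lin c \<omega> = 0 \<and> (\<Sum>i\<in>I. (c i)^2) = 0"
  then have "(\<lambda>\<omega>. lin c \<omega> ^ k) = (\<lambda>\<omega>. 0 ^ k)" by auto
  then show ?thesis by simp
next
  assume a: "0 < (\<Sum>i\<in>I. (c i)^2) \<and> distributed M lborel (lin c) (normal_density 0 (s * sqrt (\<Sum>i\<in>I. (c i)^2)))"
  show ?thesis using normal_moments(1)[OF conjunct2[OF a]] a spos by simp
qed

lemma lin_sq: "expectation (\<lambda>\<omega>. lin c \<omega> ^ 2) = s^2 * (\<Sum>i\<in>I. (c i)^2)"
  using lin_cases[of c]
proof
  assume "\<forall>\<omega>. lin c \<omega> = 0 \<and> (\<Sum>i\<in>I. (c i)^2) = 0"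
  then show ?thesis by simp
next
  assume a: "0 < (\<Sum>i\<in>I. (c i)^2) \<and> distributed M lborel (lin c) (normal_density 0 (s * sqrt (\<Sum>i\<in>I. (c i)^2)))"
  show ?thesis using normal_moments(2)[OF conjunct2[OF a]] a spos by (simp add: power_mult_distrib)
qed

lemma lin_4: "expectation (\<lambda>\<omega>. lin c \<omega> ^ 4) = 3 * s^4 * (\<Sum>i\<in>I. (c i)^2)^2"
  using lin_cases[of c]
proof
  assume "\<forall>\<omega>. lin c \<omega> = 0 \<and> (\<Sum>i\<in>I. (c i)^2) = 0"
  then show ?thesis by simp
next
  assume a: "0 < (\<Sum>i\<in>I. (c i)^2) \<and> distributed M lborel (lin c) (normal_density 0 (s * sqrt (\<Sum>i\<in>I. (c i)^2)))"
  have "sqrt (\<Sum>i\<in>I. (c i)^2) ^ 4 = (\<Sum>i\<in>I. (c i)^2)^2"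
  proof -
    have "sqrt (\<Sum>i\<in>I. (c i)^2) ^ 4 = (sqrt (\<Sum>i\<in>I. (c i)^2) ^ 2) ^ 2"
      by (simp flip: power_mult)
    then show ?thesis using a by simp
  qed
  then show ?thesis using normal_moments(3)[OF conjunct2[OF a]] a spos by (simp add: power_mult_distrib)
qed

end

context gfam begin

definition nrm :: "(nat \<Rightarrow> real) \<Rightarrow> real" where "nrm c = (\<Sum>i\<in>I. (c i)^2)"
definition ip :: "(nat \<Rightarrow> real) \<Rightarrow> (nat \<Rightarrow> real) \<Rightarrow> real" where "ip a c = (\<Sum>i\<in>I. a i * c i)"

lemma lin_add: "lin (\<lambda>i. a i + c i) \<omega> = lin a \<omega> + lin c \<omega>"
  by (simp add: lin_def distrib_right sum.distrib)
lemma lin_diff: "lin (\<lambda>i. a i - c i) \<omega> = lin a \<omega> - lin c \<omega>"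
  by (simp add: lin_def left_diff_distrib sum_subtractf)

lemma nrm_add: "nrm (\<lambda>i. a i + c i) = nrm a + nrm c + 2 * ip a c"
  by (simp add: nrm_def ip_def power2_sum sum.distrib sum_distrib_left mult.assoc)
lemma nrm_diff: "nrm (\<lambda>i. a i - c i) = nrm a + nrm c - 2 * ip a c"
  by (simp add: nrm_def ip_def power2_diff sum.distrib sum_subtractf sum_distrib_left mult.assoc)

lemma prod_int: "integrable M (\<lambda>\<omega>. lin a \<omega> * lin c \<omega>)"
proof -
  have eq: "(\<lambda>\<omega>. lin a \<omega> * lin c \<omega>) = (\<lambda>\<omega>. (lin (\<lambda>i. a i + c i) \<omega> ^ 2 - lin (\<lambda>i. a i - c i) \<omega> ^ 2) / 4)"
    by (auto simp: lin_add lin_diff power2_eq_square algebra_simps)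
  show ?thesis unfolding eq by (intro integrable_divide Bochner_Integration.integrable_diff lin_int)
qed

lemma prod_exp: "expectation (\<lambda>\<omega>. lin a \<omega> * lin c \<omega>) = s^2 * ip a c"
proof -
  have eq: "(\<lambda>\<omega>. lin a \<omega> * lin c \<omega>) = (\<lambda>\<omega>. (lin (\<lambda>i. a i + c i) \<omega> ^ 2 - lin (\<lambda>i. a i - c i) \<omega> ^ 2) / 4)"
    by (auto simp: lin_add lin_diff power2_eq_square algebra_simps)
  show ?thesis unfolding eq
    by (simp add: Bochner_Integration.integral_diff lin_int lin_sq nrm_add[unfolded nrm_def] nrm_diff[unfolded nrm_def]
        algebra_simps)
qed

lemma sqsq_eq: "(\<lambda>\<omega>. lin a \<omega> ^ 2 * lin c \<omega> ^ 2) = (\<lambda>\<omega>. (lin (\<lambda>i. a i + c i) \<omega> ^ 4 + lin (\<lambda>i. a i - c i) \<omega> ^ 4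
     - 2 * lin a \<omega> ^ 4 - 2 * lin c \<omega> ^ 4) / 12)"
  by (auto simp: lin_add lin_diff field_simps eval_nat_numeral)

lemma sqsq_int: "integrable M (\<lambda>\<omega>. lin a \<omega> ^ 2 * lin c \<omega> ^ 2)"
  unfolding sqsq_eq by (intro integrable_divide Bochner_Integration.integrable_diff Bochner_Integration.integrable_add integrable_mult_right lin_int)

lemma sqsq_exp: "expectation (\<lambda>\<omega>. lin a \<omega> ^ 2 * lin c \<omega> ^ 2) = s^4 * (nrm a * nrm c + 2 * (ip a c)^2)"
proof -
  have "expectation (\<lambda>\<omega>. lin a \<omega> ^ 2 * lin c \<omega> ^ 2) =
     (3 * s^4 * (nrm (\<lambda>i. a i + c i))^2 + 3 * s^4 * (nrm (\<lambda>i. a i - c i))^2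
      - 2 * (3 * s^4 * (nrm a)^2) - 2 * (3 * s^4 * (nrm c)^2)) / 12"
    unfolding sqsq_eq
    by (simp add: Bochner_Integration.integral_diff Bochner_Integration.integral_add Bochner_Integration.integrable_diff Bochner_Integration.integrable_add
        integrable_mult_right lin_int lin_4 nrm_def)
  also have "\<dots> = s^4 * (nrm a * nrm c + 2 * (ip a c)^2)"
    unfolding nrm_add nrm_diff by (simp add: field_simps eval_nat_numeral)
  finally show ?thesis .
qed

lemma quad_var:
  fixes C :: "nat \<Rightarrow> nat \<Rightarrow> real"
  assumes K: "finite K"
  defines "m \<equiv> s^2 * (\<Sum>k\<in>K. nrm (C k))"
  shows "integrable M (\<lambda>\<omega>. ((\<Sum>k\<in>K. lin (C k) \<omega> ^ 2) - m)^2)"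
    and "expectation (\<lambda>\<omega>. ((\<Sum>k\<in>K. lin (C k) \<omega> ^ 2) - m)^2) = 2 * s^4 * (\<Sum>k\<in>K. \<Sum>l\<in>K. (ip (C k) (C l))^2)"
proof -
  have eq: "(\<lambda>\<omega>. ((\<Sum>k\<in>K. lin (C k) \<omega> ^ 2) - m)^2) =
    (\<lambda>\<omega>. (\<Sum>k\<in>K. \<Sum>l\<in>K. lin (C k) \<omega> ^ 2 * lin (C l) \<omega> ^ 2) - 2 * m * (\<Sum>k\<in>K. lin (C k) \<omega> ^ 2) + m^2)"
  proof
    fix \<omega>
    have "(\<Sum>k\<in>K. lin (C k) \<omega> ^ 2)^2 = (\<Sum>k\<in>K. \<Sum>l\<in>K. lin (C k) \<omega> ^ 2 * lin (C l) \<omega> ^ 2)"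
      by (simp only: power2_eq_square[of "sum _ _"] sum_product)
    then show "((\<Sum>k\<in>K. lin (C k) \<omega> ^ 2) - m)^2 =
      (\<Sum>k\<in>K. \<Sum>l\<in>K. lin (C k) \<omega> ^ 2 * lin (C l) \<omega> ^ 2) - 2 * m * (\<Sum>k\<in>K. lin (C k) \<omega> ^ 2) + m^2"
      by (simp add: power2_diff)
  qed
  have i1: "integrable M (\<lambda>x. \<Sum>k\<in>K. \<Sum>l\<in>K. (lin (C k) x)\<^sup>2 * (lin (C l) x)\<^sup>2)"
    by (rule Bochner_Integration.integrable_sum, rule Bochner_Integration.integrable_sum, rule sqsq_int)
  have i2: "integrable M (\<lambda>x. \<Sum>k\<in>K. (lin (C k) x)\<^sup>2)"
    by (rule Bochner_Integration.integrable_sum, rule lin_int)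
  show "integrable M (\<lambda>\<omega>. ((\<Sum>k\<in>K. lin (C k) \<omega> ^ 2) - m)^2)"
    unfolding eq using i1 i2 by (intro Bochner_Integration.integrable_add Bochner_Integration.integrable_diff integrable_mult_right) auto
  have "expectation (\<lambda>\<omega>. ((\<Sum>k\<in>K. lin (C k) \<omega> ^ 2) - m)^2) =
    (\<Sum>k\<in>K. \<Sum>l\<in>K. s^4 * (nrm (C k) * nrm (C l) + 2 * (ip (C k) (C l))^2)) - 2 * m * (\<Sum>k\<in>K. s^2 * nrm (C k)) + m^2"
    unfolding eq using i1 i2
    by (simp add: Bochner_Integration.integral_diff Bochner_Integration.integral_add Bochner_Integration.integrable_diff Bochner_Integration.integrable_add
        Bochner_Integration.integrable_sum integrable_mult_right sqsq_int lin_int sqsq_exp lin_sq[folded nrm_def] prob_space)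
  also have "\<dots> = 2 * s^4 * (\<Sum>k\<in>K. \<Sum>l\<in>K. (ip (C k) (C l))^2)"
  proof -
    have "(\<Sum>k\<in>K. nrm (C k) * (\<Sum>l\<in>K. nrm (C l))) = (\<Sum>k\<in>K. nrm (C k)) * (\<Sum>k\<in>K. nrm (C k))"
      by (simp add: sum_distrib_right)
    then show ?thesis unfolding m_def
    by (simp add: sum.distrib distrib_left sum_distrib_left[symmetric] sum_product[symmetric] power2_eq_square
        algebra_simps eval_nat_numeral)
  qed
  finally show "expectation (\<lambda>\<omega>. ((\<Sum>k\<in>K. lin (C k) \<omega> ^ 2) - m)^2) = 2 * s^4 * (\<Sum>k\<in>K. \<Sum>l\<in>K. (ip (C k) (C l))^2)" .
qed

end

lemma frac_nat_div:
  assumes "0 < c"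
  shows "frac (real a / real c) = real (a mod c) / real c"
proof -
  have "real a = real (a div c) * real c + real (a mod c)"
    by (metis of_nat_add of_nat_mult div_mult_mod_eq)
  then have "real a / real c - real (a mod c) / real c = real (a div c)"
    using assms by (simp add: field_simps)
  moreover have "real (a mod c) < real c" using assms by simp
  ultimately show ?thesis using assms unfolding frac_unique_iff
    by (metis Ints_of_nat divide_less_eq_1_pos divide_nonneg_nonneg of_nat_0_le_iff of_nat_0_less_iff)
qed

lemma ww_grid:
  fixes f :: "real \<Rightarrow> real" and b :: nat and \<alpha> :: real
  assumes b: "1 \<le> b" and f0: "f 0 = 0"
  shows "(\<Sum>m. \<alpha> ^ m * f (frac (real b ^ m * (real a / real b ^ n)))) =
         (\<Sum>m<n. \<alpha> ^ m * f (real (a mod b ^ (n - m)) / real b ^ (n - m)))"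
proof -
  have z: "\<alpha> ^ m * f (frac (real b ^ m * (real a / real b ^ n))) = 0" if "m \<notin> {..<n}" for m
  proof -
    have e: "real b ^ m = real b ^ n * real b ^ (m-n)" using that by (simp flip: power_add)
    have "real b ^ m * (real a / real b ^ n) = real (a * b ^ (m - n))"
      using b unfolding e by (simp add: field_simps)
    then show ?thesis using f0 by (simp add: frac_def)
  qed
  have "(\<Sum>m. \<alpha> ^ m * f (frac (real b ^ m * (real a / real b ^ n)))) =
        (\<Sum>m<n. \<alpha> ^ m * f (frac (real b ^ m * (real a / real b ^ n))))"
    by (rule suminf_finite) (use z in auto)
  also have "\<dots> = (\<Sum>m<n. \<alpha> ^ m * f (real (a mod b ^ (n - m)) / real b ^ (n - m)))"
  proof (rule sum.cong)
    fix m assume m: "m \<in> {..<n}"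
    have e: "real b ^ n = real b ^ m * real b ^ (n-m)" using m by (simp flip: power_add)
    have "real b ^ m * (real a / real b ^ n) = real a / real (b ^ (n - m))"
      using b unfolding e by (simp add: field_simps)
    then show "\<alpha> ^ m * f (frac (real b ^ m * (real a / real b ^ n))) =
               \<alpha> ^ m * f (real (a mod b ^ (n - m)) / real b ^ (n - m))"
      using frac_nat_div[of "b ^ (n - m)" a] b by simp
  qed simp
  finally show ?thesis .
qed

lemma incr_wrap:
  fixes f :: "real \<Rightarrow> real" and b :: nat
  assumes b: "1 \<le> b" and f0: "f 0 = f 1"
  shows "f (real ((k + 1) mod b ^ j) / real b ^ j) = f ((real (k mod b ^ j) + 1) / real b ^ j)"
proof (cases "Suc (k mod b ^ j) = b ^ j")
  case False
  then have "(k + 1) mod b ^ j = k mod b ^ j + 1"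
    by (simp add: mod_Suc)
  then show ?thesis by (simp add: add.commute)
next
  case True
  then have "(k + 1) mod b ^ j = 0"
    by (simp add: mod_Suc)
  moreover have "real (k mod b ^ j) + 1 = real b ^ j"
    using True by (metis of_nat_Suc of_nat_power add.commute)
  moreover have "real b ^ j \<noteq> 0" using b by simp
  ultimately show ?thesis using f0 by simp
qed

lemma ww_incr:
  fixes f :: "real \<Rightarrow> real" and b :: nat and \<alpha> :: real
  assumes b: "1 \<le> b" and f0: "f 0 = 0" and f1: "f 1 = 0"
  shows "(\<Sum>m. \<alpha> ^ m * f (frac (real b ^ m * ((real k + 1) / real b ^ n)))) -
         (\<Sum>m. \<alpha> ^ m * f (frac (real b ^ m * (real k / real b ^ n)))) =
         (\<Sum>m<n. \<alpha> ^ m * (f ((real (k mod b ^ (n - m)) + 1) / real b ^ (n - m)) -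
                              f (real (k mod b ^ (n - m)) / real b ^ (n - m))))"
proof -
  have "(\<Sum>m. \<alpha> ^ m * f (frac (real b ^ m * ((real k + 1) / real b ^ n)))) =
        (\<Sum>m<n. \<alpha> ^ m * f (real ((k+1) mod b ^ (n - m)) / real b ^ (n - m)))"
  proof -
    have *: "real (Suc k) = real k + 1" by simp
    show ?thesis using ww_grid[where f=f, OF b f0, of \<alpha> "Suc k" n] unfolding * by simp
  qed
  also have "\<dots> = (\<Sum>m<n. \<alpha> ^ m * f ((real (k mod b ^ (n - m)) + 1) / real b ^ (n - m)))"
    using incr_wrap[OF b, of f] f0 f1 by simp
  finally show ?thesis
    using ww_grid[where f=f, OF b f0, of \<alpha> k n] by (simp add: sum_subtractf right_diff_distrib)
qed

lemma sum_divmod_split: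
  fixes f :: "nat \<Rightarrow> 'b::comm_monoid_add"
  shows "(\<Sum>i<A*B. f i) = (\<Sum>R<A. \<Sum>s<B. f (R*B + s))"
proof (induction A)
  case 0 then show ?case by simp
next
  case (Suc A)
  have "(\<Sum>i<Suc A * B. f i) = (\<Sum>i<A*B. f i) + (\<Sum>i\<in>{A*B..<A*B+B}. f i)"
    by (simp add: sum.atLeastLessThan_concat[symmetric] atLeast0LessThan[symmetric] add.commute)
  also have "(\<Sum>i\<in>{A*B..<A*B+B}. f i) = (\<Sum>s<B. f (A*B + s))"
  proof -
    have "(\<Sum>i\<in>{0+A*B..<B+A*B}. f i) = (\<Sum>i\<in>{0..<B}. f (i + A*B))"
      by (rule sum.shift_bounds_nat_ivl)
    then show ?thesis by (simp add: atLeast0LessThan add.commute)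
  qed
  finally show ?case using Suc by simp
qed

lemma count_div:
  assumes "r < A" "0 < B"
  shows "(\<Sum>i<A*B. (if i div B = r then 1 else 0 :: real)) = real B"
proof -
  have "(\<Sum>i<A*B. (if i div B = r then 1 else 0 :: real)) =
        (\<Sum>R<A. \<Sum>s<B. (if (R*B+s) div B = r then 1 else 0 :: real))"
    by (rule sum_divmod_split)
  also have "\<dots> = (\<Sum>R<A. if R = r then real B else 0)"
    using assms by (intro sum.cong refl) auto
  also have "\<dots> = real B" using assms by simp
  finally show ?thesis .
qed

lemma count_mod:
  assumes "r < B"
  shows "(\<Sum>i<A*B. (if i mod B = r then 1 else 0 :: real)) = real A"
proof -
  have "(\<Sum>i<A*B. (if i mod B = r then 1 else 0 :: real)) =
        (\<Sum>R<A. \<Sum>s<B. (if (R*B+s) mod B = r then 1 else 0 :: real))"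
    by (rule sum_divmod_split)
  also have "\<dots> = (\<Sum>R<A. 1)"
  proof (intro sum.cong refl)
    fix R
    have "(\<Sum>s<B. (if (R*B+s) mod B = r then 1 else 0 :: real)) = (\<Sum>s<B. (if s = r then 1 else 0 :: real))"
      by (intro sum.cong refl) auto
    also have "\<dots> = 1" using assms by simp
    finally show "(\<Sum>s<B. (if (R*B+s) mod B = r then 1 else 0 :: real)) = 1" .
  qed
  finally show ?thesis by simp
qed

lemma cong_self_power:
  fixes x :: int and B :: int
  assumes "[x = x * B] (mod Q)"
  shows "[x = x * B ^ k] (mod Q)"
proof (induction k)
  case 0 then show ?case by simp
next
  case (Suc k)
  have "[x * B ^ k = x * B * B ^ k] (mod Q)"
    using cong_mult[OF assms cong_refl[of "B ^ k"]] by simp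
  then show ?case using Suc cong_trans by (simp add: mult.assoc mult.commute mult.left_commute)
qed

lemma periodic_inj:
  fixes b j d :: nat
  assumes b: "2 \<le> b" and d: "1 \<le> d"
  shows "inj_on (\<lambda>R. R mod b ^ d) {R. R < b ^ (j + d) \<and> R div b ^ d = R mod b ^ j}"
proof (rule inj_onI)
  fix R1 R2 assume R1: "R1 \<in> {R. R < b ^ (j + d) \<and> R div b ^ d = R mod b ^ j}"
    and R2: "R2 \<in> {R. R < b ^ (j + d) \<and> R div b ^ d = R mod b ^ j}"
    and eq: "R1 mod b ^ d = R2 mod b ^ d"
  define q1 where "q1 = R1 div b ^ d"
  define q2 where "q2 = R2 div b ^ d"
  define sd where "sd = R1 mod b ^ d"
  have R1e: "R1 = q1 * b ^ d + sd" using div_mult_mod_eq[of R1 "b^d"] by (simp add: q1_def sd_def)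
  have R2e: "R2 = q2 * b ^ d + sd" using div_mult_mod_eq[of R2 "b^d"] by (simp add: q2_def sd_def eq)
  have q1lt: "q1 < b ^ j" using R1 b by (simp add: q1_def less_mult_imp_div_less power_add)
  have q2lt: "q2 < b ^ j" using R2 b by (simp add: q2_def less_mult_imp_div_less power_add)
  have q1m: "q1 = R1 mod b ^ j" using R1 q1_def by simp
  have q2m: "q2 = R2 mod b ^ j" using R2 q2_def by simp
  have n1: "[q1 = q1 * b ^ d + sd] (mod b ^ j)"
  proof -
    have "(q1 * b ^ d + sd) mod b ^ j = R1 mod b ^ j" by (simp only: R1e[symmetric])
    moreover have "q1 mod b ^ j = R1 mod b ^ j" using q1m by simp
    ultimately show ?thesis unfolding cong_def by simp
  qed
  have n2: "[q2 = q2 * b ^ d + sd] (mod b ^ j)"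
  proof -
    have "(q2 * b ^ d + sd) mod b ^ j = R2 mod b ^ j" by (simp only: R2e[symmetric])
    moreover have "q2 mod b ^ j = R2 mod b ^ j" using q2m by simp
    ultimately show ?thesis unfolding cong_def by simp
  qed
  have c1: "[int q1 = int q1 * int b ^ d + int sd] (mod int (b ^ j))"
    using n1 unfolding cong_int_iff[symmetric] by simp
  have c2: "[int q2 = int q2 * int b ^ d + int sd] (mod int (b ^ j))"
    using n2 unfolding cong_int_iff[symmetric] by simp
  define x where "x = int q1 - int q2"
  have cx: "[x = x * int b ^ d] (mod int (b ^ j))"
    unfolding x_def using cong_diff[OF c1 c2] by (simp add: algebra_simps)
  have "[x = x * (int b ^ d) ^ j] (mod int (b ^ j))"
    by (rule cong_self_power[OF cx])
  moreover have "int (b ^ j) dvd x * (int b ^ d) ^ j"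
  proof -
    have dj: "d * j = j + (d - 1) * j" using d by (cases d) auto
    have "(int b ^ d) ^ j = int b ^ j * int b ^ ((d - 1) * j)"
      by (simp add: power_mult[symmetric] power_add[symmetric] dj)
    then show ?thesis by simp
  qed
  ultimately have "int (b ^ j) dvd x"
    using cong_dvd_iff by blast
  moreover have "\<bar>x\<bar> < int (b ^ j)"
  proof -
    have "int q1 < int (b ^ j)" "int q2 < int (b ^ j)" using q1lt q2lt by simp_all
    then show ?thesis unfolding x_def by linarith
  qed
  ultimately have "x = 0"
  proof -
    assume dv: "int (b ^ j) dvd x" and lt: "\<bar>x\<bar> < int (b ^ j)"
    show "x = 0"
    proof (rule ccontr)
      assume "x \<noteq> 0"
      then have "\<bar>int (b ^ j)\<bar> \<le> \<bar>x\<bar>" using dvd_imp_le_int dv by blast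
      then show False using lt by simp
    qed
  qed
  then have "q1 = q2" by (simp add: x_def)
  then show "R1 = R2" using R1e R2e by simp
qed

lemma periodic_card:
  fixes b j d :: nat
  assumes b: "2 \<le> b" and d: "1 \<le> d"
  shows "card {R. R < b ^ (j + d) \<and> R div b ^ d = R mod b ^ j} \<le> b ^ d"
proof -
  have "card {R. R < b ^ (j + d) \<and> R div b ^ d = R mod b ^ j} \<le> card {..<b ^ d}"
    apply (rule card_inj_on_le[OF periodic_inj[OF b d]])
    using b by auto
  then show ?thesis by simp
qed

lemma sum_ind_card:
  "finite A \<Longrightarrow> (\<Sum>R\<in>A. (if P R then 1 else 0 :: real)) = real (card {R\<in>A. P R})"
proof -
  assume f: "finite A"
  have "(\<Sum>R\<in>A. (if P R then 1 else 0 :: real)) = (\<Sum>R\<in>A \<inter> {R. P R}. 1) + (\<Sum>R\<in>A \<inter> - {R. P R}. 0)"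
    by (rule sum.If_cases[OF f])
  also have "A \<inter> {R. P R} = {R\<in>A. P R}" by auto
  finally show ?thesis by simp
qed

locale coefs =
  fixes \<alpha> :: real and b :: nat and n :: nat
  assumes b2: "2 \<le> b" and apos: "0 < \<alpha>" and alt1: "\<alpha> < 1" and crit: "\<alpha>\<^sup>2 * real b = 1"
begin

definition ee :: "nat \<Rightarrow> nat \<Rightarrow> nat \<Rightarrow> real" where
  "ee m k i = (if i div b ^ m = k mod b ^ (n - m) then 1 else 0)"

definition cf :: "nat \<Rightarrow> nat \<Rightarrow> real" where
  "cf k i = (\<Sum>m<n. \<alpha> ^ m * ee m k i)"

lemma ee_01: "ee m k i = 0 \<or> ee m k i = 1" by (simp add: ee_def)
lemma ee_nn: "0 \<le> ee m k i" by (simp add: ee_def)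
lemma ee_le1: "ee m k i \<le> 1" by (simp add: ee_def)
lemma ee_sq: "ee m k i * ee m k i = ee m k i" by (simp add: ee_def)

lemma bpos: "0 < b" using b2 by simp

lemma pow_split: "m \<le> n \<Longrightarrow> b ^ n = b ^ (n - m) * b ^ m"
  by (simp flip: power_add)

lemma sum_ee_i: assumes "m \<le> n" shows "(\<Sum>i<b^n. ee m k i) = real b ^ m"
proof -
  have "(\<Sum>i<b ^ (n - m) * b ^ m. (if i div b ^ m = k mod b ^ (n - m) then 1 else 0 :: real)) = real (b ^ m)"
    by (rule count_div) (use bpos in auto)
  then show ?thesis using pow_split[OF assms] by (simp add: ee_def)
qed

lemma sum_ee_k: assumes "m \<le> n" "i < b ^ n" shows "(\<Sum>k<b^n. ee m k i) = real b ^ m"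
proof -
  have lt: "i div b ^ m < b ^ (n - m)"
    using assms pow_split[OF assms(1)] by (simp add: less_mult_imp_div_less)
  have "(\<Sum>k<b ^ m * b ^ (n - m). (if k mod b ^ (n - m) = i div b ^ m then 1 else 0 :: real)) = real (b ^ m)"
    by (rule count_mod[OF lt])
  then show ?thesis using pow_split[OF assms(1)] by (simp add: ee_def eq_commute mult.commute)
qed

lemma G_le1: "(\<Sum>i<b^n. ee m k i * ee m' l i) \<le> real b ^ m" if "m \<le> n"
proof -
  have "(\<Sum>i<b^n. ee m k i * ee m' l i) \<le> (\<Sum>i<b^n. ee m k i)"
    by (intro sum_mono) (simp add: ee_def)
  then show ?thesis using sum_ee_i[OF that] by simp
qed

lemma G_le2: "(\<Sum>i<b^n. ee m k i * ee m' l i) \<le> real b ^ m'" if "m' \<le> n"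
proof -
  have "(\<Sum>i<b^n. ee m k i * ee m' l i) \<le> (\<Sum>i<b^n. ee m' l i)"
    by (intro sum_mono) (simp add: ee_def)
  then show ?thesis using sum_ee_i[OF that] by simp
qed

lemma G_nn: "0 \<le> (\<Sum>i<b^n. ee m k i * ee m' l i)"
  by (intro sum_nonneg) (simp add: ee_def)

lemma G_diag: "m \<le> n \<Longrightarrow> (\<Sum>i<b^n. ee m k i * ee m k i) = real b ^ m"
  using sum_ee_i by (simp add: ee_sq)

lemma G_total: assumes "m \<le> n" "m' \<le> n"
  shows "(\<Sum>k<b^n. \<Sum>l<b^n. \<Sum>i<b^n. ee m k i * ee m' l i) = real b ^ n * real b ^ m * real b ^ m'"
proof -
  have "(\<Sum>i<b^n. (\<Sum>k<b^n. ee m k i) * (\<Sum>l<b^n. ee m' l i)) =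
        (\<Sum>i<b^n. \<Sum>k<b^n. \<Sum>l<b^n. ee m k i * ee m' l i)"
    by (simp only: sum_product)
  also have "\<dots> = (\<Sum>k<b^n. \<Sum>i<b^n. \<Sum>l<b^n. ee m k i * ee m' l i)"
    by (rule sum.swap)
  also have "\<dots> = (\<Sum>k<b^n. \<Sum>l<b^n. \<Sum>i<b^n. ee m k i * ee m' l i)"
    by (rule sum.cong[OF refl]) (rule sum.swap)
  finally have e: "(\<Sum>k<b^n. \<Sum>l<b^n. \<Sum>i<b^n. ee m k i * ee m' l i) =
     (\<Sum>i<b^n. (\<Sum>k<b^n. ee m k i) * (\<Sum>l<b^n. ee m' l i))" by simp
  also have "\<dots> = (\<Sum>i<b^n. real b ^ m * real b ^ m')"
    by (intro sum.cong refl) (simp add: sum_ee_k assms)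
  finally show ?thesis by simp
qed

end

context coefs begin

lemma offdiag_count:
  assumes mm: "m' < m" "m < n"
  shows "(\<Sum>k<b^n. \<Sum>i<b^n. ee m k i * ee m' k i) \<le> real b ^ m * real b ^ m'"
proof -
  define d where "d = m - m'"
  define P where "P R \<longleftrightarrow> R div b ^ d = R mod b ^ (n - m)" for R
  have d1: "1 \<le> d" using mm by (simp add: d_def)
  have bm: "b ^ m = b ^ m' * b ^ d" using mm by (simp add: d_def flip: power_add)
  have dvd: "b ^ (n - m) dvd b ^ (n - m')" using mm by (intro le_imp_power_dvd) simp
  have key: "ee m k i * ee m' k i = (if P (i div b ^ m') then 1 else 0) * ee m' k i" for k i
  proof (cases "i div b ^ m' = k mod b ^ (n - m')")
    case True
    have "k mod b ^ (n - m) = (k mod b ^ (n - m')) mod b ^ (n - m)"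
      using dvd by (simp add: mod_mod_cancel)
    moreover have "i div b ^ m = (i div b ^ m') div b ^ d"
      by (simp add: bm div_mult2_eq)
    ultimately show ?thesis using True by (simp add: ee_def P_def)
  next
    case False then show ?thesis by (simp add: ee_def)
  qed
  have "(\<Sum>k<b^n. \<Sum>i<b^n. ee m k i * ee m' k i) = (\<Sum>i<b^n. \<Sum>k<b^n. ee m k i * ee m' k i)"
    by (rule sum.swap)
  also have "\<dots> = (\<Sum>i<b^n. (if P (i div b ^ m') then 1 else 0) * real b ^ m')"
  proof (rule sum.cong[OF refl])
    fix i assume i: "i \<in> {..<b^n}"
    have "(\<Sum>k<b^n. ee m k i * ee m' k i) = (\<Sum>k<b^n. (if P (i div b ^ m') then 1 else 0) * ee m' k i)"
      by (simp only: key)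
    also have "\<dots> = (if P (i div b ^ m') then 1 else 0) * (\<Sum>k<b^n. ee m' k i)"
      by (simp add: sum_distrib_left)
    also have "\<dots> = (if P (i div b ^ m') then 1 else 0) * real b ^ m'"
      using i mm by (simp add: sum_ee_k)
    finally show "(\<Sum>k<b^n. ee m k i * ee m' k i) = (if P (i div b ^ m') then 1 else 0) * real b ^ m'" .
  qed
  also have "\<dots> = (\<Sum>R<b ^ (n - m'). \<Sum>s<b ^ m'. (if P ((R * b ^ m' + s) div b ^ m') then 1 else 0) * real b ^ m')"
    using sum_divmod_split[of "\<lambda>i. (if P (i div b ^ m') then 1 else 0) * real b ^ m'" "b ^ (n - m')" "b ^ m'"]
      pow_split[of m'] mm by simp
  also have "\<dots> = (\<Sum>R<b ^ (n - m'). (if P R then 1 else 0) * (real b ^ m' * real b ^ m'))"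
    using bpos by (intro sum.cong refl) simp
  also have "\<dots> = (\<Sum>R<b ^ (n - m'). (if P R then 1 else 0)) * (real b ^ m' * real b ^ m')"
    by (simp add: sum_distrib_right)
  also have "(\<Sum>R<b ^ (n - m'). (if P R then 1 else 0 :: real)) = real (card {R\<in>{..<b ^ (n - m')}. P R})"
    by (rule sum_ind_card) simp
  also have "{R\<in>{..<b ^ (n - m')}. P R} = {R. R < b ^ ((n - m) + d) \<and> R div b ^ d = R mod b ^ (n - m)}"
    using mm by (auto simp: P_def d_def)
  also have "real (card \<dots>) \<le> real (b ^ d)"
    using periodic_card[OF b2 d1, of "n - m"] by linarith
  finally have "(\<Sum>k<b^n. \<Sum>i<b^n. ee m k i * ee m' k i) \<le> real (b ^ d) * (real b ^ m' * real b ^ m')"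
    by (simp add: mult_right_mono)
  also have "\<dots> = real b ^ m * real b ^ m'"
  proof -
    have "real b ^ m = real b ^ m' * real b ^ d" using bm by (metis of_nat_mult of_nat_power)
    then show ?thesis by simp
  qed
  finally show ?thesis .
qed

end

lemma geom_rev_bound:
  fixes r :: real assumes "0 \<le> r" "r < 1"
  shows "(\<Sum>m<n. r ^ (n - m)) \<le> 1 / (1 - r)"
proof -
  have "(\<Sum>m<n. r ^ (n - m)) = (\<Sum>i<n. r ^ (n - Suc i + 1))"
  proof (rule sum.cong[OF refl])
    fix m assume "m \<in> {..<n}"
    then have "n - m = n - Suc m + 1" by auto
    then show "r ^ (n - m) = r ^ (n - Suc m + 1)" by simp
  qed
  also have "\<dots> = (\<Sum>i<n. r ^ (i + 1))"
    using sum.nat_diff_reindex[of "\<lambda>i. r ^ (i + 1)" n] by simp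
  also have "\<dots> \<le> (\<Sum>i<n. r ^ i)"
    using assms by (intro sum_mono) (simp add: power_le_one mult_left_le_one_le)
  also have "\<dots> = (1 - r ^ n) / (1 - r)"
    using assms by (simp add: sum_gp_strict)
  also have "\<dots> \<le> 1 / (1 - r)"
    using assms by (intro divide_right_mono) auto
  finally show ?thesis .
qed

lemma weighted_cs:
  fixes x w :: "'i \<Rightarrow> real"
  assumes "\<And>p. p \<in> P \<Longrightarrow> 0 < w p"
  shows "(\<Sum>p\<in>P. x p)\<^sup>2 \<le> (\<Sum>p\<in>P. w p) * (\<Sum>p\<in>P. (x p)\<^sup>2 / w p)"
proof -
  have "(\<Sum>p\<in>P. sqrt (w p) * (x p / sqrt (w p)))\<^sup>2 \<le> (\<Sum>p\<in>P. (sqrt (w p))\<^sup>2) * (\<Sum>p\<in>P. (x p / sqrt (w p))\<^sup>2)"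
    by (rule Cauchy_Schwarz_ineq_sum)
  moreover have "(\<Sum>p\<in>P. sqrt (w p) * (x p / sqrt (w p))) = (\<Sum>p\<in>P. x p)"
  proof (rule sum.cong[OF refl])
    fix p assume "p \<in> P"
    then have "0 < sqrt (w p)" using assms by simp
    then show "sqrt (w p) * (x p / sqrt (w p)) = x p" by simp
  qed
  moreover have "(\<Sum>p\<in>P. (sqrt (w p))\<^sup>2) = (\<Sum>p\<in>P. w p)"
    using assms by (intro sum.cong refl) (simp add: less_imp_le)
  moreover have "(\<Sum>p\<in>P. (x p / sqrt (w p))\<^sup>2) = (\<Sum>p\<in>P. (x p)\<^sup>2 / w p)"
    using assms by (intro sum.cong refl) (simp add: power_divide less_imp_le)
  ultimately show ?thesis by simp
qed

context coefs begin

definition G :: "nat \<Rightarrow> nat \<Rightarrow> nat \<Rightarrow> nat \<Rightarrow> real" where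
  "G m m' k l = (\<Sum>i<b^n. ee m k i * ee m' l i)"

definition ipc :: "nat \<Rightarrow> nat \<Rightarrow> real" where
  "ipc k l = (\<Sum>i<b^n. cf k i * cf l i)"

lemma ab1: "\<alpha> ^ m * \<alpha> ^ m * real b ^ m = 1"
proof -
  have "\<alpha> ^ m * \<alpha> ^ m * real b ^ m = (\<alpha>\<^sup>2 * real b) ^ m"
    by (simp add: power_mult_distrib power2_eq_square)
  then show ?thesis using crit by simp
qed

lemma ipc_expand: "ipc k l = (\<Sum>m<n. \<Sum>m'<n. \<alpha> ^ m * \<alpha> ^ m' * G m m' k l)"
proof -
  have "ipc k l = (\<Sum>i<b^n. \<Sum>m<n. \<Sum>m'<n. \<alpha> ^ m * \<alpha> ^ m' * (ee m k i * ee m' l i))"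
    unfolding ipc_def cf_def sum_product by (simp add: algebra_simps)
  also have "\<dots> = (\<Sum>m<n. \<Sum>i<b^n. \<Sum>m'<n. \<alpha> ^ m * \<alpha> ^ m' * (ee m k i * ee m' l i))"
    by (rule sum.swap)
  also have "\<dots> = (\<Sum>m<n. \<Sum>m'<n. \<Sum>i<b^n. \<alpha> ^ m * \<alpha> ^ m' * (ee m k i * ee m' l i))"
    by (rule sum.cong[OF refl]) (rule sum.swap)
  also have "\<dots> = (\<Sum>m<n. \<Sum>m'<n. \<alpha> ^ m * \<alpha> ^ m' * G m m' k l)"
    unfolding G_def by (simp add: sum_distrib_left)
  finally show ?thesis .
qed

lemma G_nn': "0 \<le> G m m' k l" unfolding G_def by (rule G_nn)

lemma ipc_diag_ge: "real n \<le> ipc k k"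
proof -
  have "real n = (\<Sum>m<n. \<alpha> ^ m * \<alpha> ^ m * G m m k k)"
    using G_diag ab1 by (simp add: G_def)
  also have "\<dots> \<le> (\<Sum>m<n. \<Sum>m'<n. \<alpha> ^ m * \<alpha> ^ m' * G m m' k k)"
  proof (rule sum_mono)
    fix m assume m: "m \<in> {..<n}"
    show "\<alpha> ^ m * \<alpha> ^ m * G m m k k \<le> (\<Sum>m'<n. \<alpha> ^ m * \<alpha> ^ m' * G m m' k k)"
      using member_le_sum[of m "{..<n}" "\<lambda>m'. \<alpha> ^ m * \<alpha> ^ m' * G m m' k k"] m apos G_nn' by simp
  qed
  finally show ?thesis by (simp add: ipc_expand)
qed

lemma ipc_diag_le: "ipc k k \<le> real n ^ 2"
proof -
  have "ipc k k = (\<Sum>i<b^n. (\<Sum>m<n. \<alpha> ^ m * ee m k i)\<^sup>2)"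
    by (simp add: ipc_def cf_def power2_eq_square)
  also have "\<dots> \<le> (\<Sum>i<b^n. real n * (\<Sum>m<n. \<alpha> ^ m * \<alpha> ^ m * ee m k i))"
  proof (rule sum_mono)
    fix i
    have "(\<Sum>m<n. 1 * (\<alpha> ^ m * ee m k i))\<^sup>2 \<le> (\<Sum>m<n. 1\<^sup>2) * (\<Sum>m<n. (\<alpha> ^ m * ee m k i)\<^sup>2)"
      by (rule Cauchy_Schwarz_ineq_sum)
    moreover have "(\<Sum>m<n. (\<alpha> ^ m * ee m k i)\<^sup>2) = (\<Sum>m<n. \<alpha> ^ m * \<alpha> ^ m * ee m k i)"
      by (intro sum.cong refl) (simp add: power2_eq_square ee_def)
    ultimately show "(\<Sum>m<n. \<alpha> ^ m * ee m k i)\<^sup>2 \<le> real n * (\<Sum>m<n. \<alpha> ^ m * \<alpha> ^ m * ee m k i)" by simp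
  qed
  also have "\<dots> = real n * (\<Sum>m<n. \<alpha> ^ m * \<alpha> ^ m * (\<Sum>i<b^n. ee m k i))"
    by (simp add: sum_distrib_left sum.swap[of _ "{..<b^n}" "{..<n}"])
  also have "\<dots> = real n * real n"
    using sum_ee_i ab1 by simp
  finally show ?thesis by (simp add: power2_eq_square)
qed

end

context coefs begin

lemma G_sym: "G m m' k l = G m' m l k"
  unfolding G_def by (simp add: mult.commute)

lemma G_le_min: "m \<le> n \<Longrightarrow> m' \<le> n \<Longrightarrow> G m m' k l \<le> real b ^ min m m'"
  unfolding G_def using G_le1 G_le2 by (cases "m \<le> m'") (auto simp: min_def)

lemma an_split: "m \<le> n \<Longrightarrow> \<alpha> ^ n = \<alpha> ^ (n - m) * \<alpha> ^ m"
  by (simp flip: power_add)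

lemma ab_rev: "m \<le> n \<Longrightarrow> \<alpha> ^ m * real b ^ m * \<alpha> ^ n = \<alpha> ^ (n - m)"
  using an_split[of m] ab1[of m] by (simp add: algebra_simps)

lemma ab_n: "\<alpha> ^ n * \<alpha> ^ n * real b ^ n = 1" by (rule ab1)

lemma mean_upper: "(\<Sum>k<b^n. ipc k k) \<le> real b ^ n * (real n + (1 / (1 - \<alpha>))\<^sup>2)"
proof -
  have "(\<Sum>k<b^n. ipc k k) = (\<Sum>m<n. \<Sum>m'<n. \<alpha> ^ m * \<alpha> ^ m' * (\<Sum>k<b^n. G m m' k k))"
  proof -
    have "(\<Sum>k<b^n. ipc k k) = (\<Sum>k<b^n. \<Sum>m<n. \<Sum>m'<n. \<alpha> ^ m * \<alpha> ^ m' * G m m' k k)"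
      by (simp add: ipc_expand)
    also have "\<dots> = (\<Sum>m<n. \<Sum>k<b^n. \<Sum>m'<n. \<alpha> ^ m * \<alpha> ^ m' * G m m' k k)"
      by (rule sum.swap)
    also have "\<dots> = (\<Sum>m<n. \<Sum>m'<n. \<Sum>k<b^n. \<alpha> ^ m * \<alpha> ^ m' * G m m' k k)"
      by (rule sum.cong[OF refl]) (rule sum.swap)
    finally show ?thesis by (simp add: sum_distrib_left)
  qed
  also have "\<dots> \<le> (\<Sum>m<n. \<Sum>m'<n. (if m = m' then real b ^ n else 0) + (\<alpha> ^ m * real b ^ m) * (\<alpha> ^ m' * real b ^ m'))"
  proof (intro sum_mono)
    fix m m' assume m: "m \<in> {..<n}" and m': "m' \<in> {..<n}"
    show "\<alpha> ^ m * \<alpha> ^ m' * (\<Sum>k<b^n. G m m' k k) \<le>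
          (if m = m' then real b ^ n else 0) + (\<alpha> ^ m * real b ^ m) * (\<alpha> ^ m' * real b ^ m')"
    proof (cases "m = m'")
      case True
      have "(\<Sum>k<b^n. G m m' k k) = real b ^ n * real b ^ m"
        using True m G_diag by (simp add: G_def)
      then have "\<alpha> ^ m * \<alpha> ^ m' * (\<Sum>k<b^n. G m m' k k) = real b ^ n"
        using True ab1[of m] by (simp add: algebra_simps)
      then show ?thesis using True apos by simp
    next
      case False
      have "(\<Sum>k<b^n. G m m' k k) \<le> real b ^ m * real b ^ m'"
      proof (cases "m' < m")
        case True
        then show ?thesis using offdiag_count[of m' m] m by (simp add: G_def)
      next
        case F: False
        then have "m < m'" using False by simp
        then have "(\<Sum>k<b^n. G m' m k k) \<le> real b ^ m' * real b ^ m"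
          using offdiag_count[of m m'] m' by (simp add: G_def)
        then show ?thesis by (simp add: G_sym[of m m'] mult.commute)
      qed
      then have "\<alpha> ^ m * \<alpha> ^ m' * (\<Sum>k<b^n. G m m' k k) \<le> \<alpha> ^ m * \<alpha> ^ m' * (real b ^ m * real b ^ m')"
        using apos by (intro mult_left_mono) auto
      then show ?thesis using False by (simp add: algebra_simps)
    qed
  qed
  also have "\<dots> = real n * real b ^ n + (\<Sum>m<n. \<alpha> ^ m * real b ^ m)\<^sup>2"
    by (simp add: sum.distrib power2_eq_square sum_product)
  also have "(\<Sum>m<n. \<alpha> ^ m * real b ^ m)\<^sup>2 \<le> real b ^ n * (1 / (1 - \<alpha>))\<^sup>2"
  proof -
    have e: "\<alpha> ^ n * (\<Sum>m<n. \<alpha> ^ m * real b ^ m) = (\<Sum>m<n. \<alpha> ^ (n - m))"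
      by (simp add: sum_distrib_left ab_rev[symmetric] mult.commute mult.left_commute)
    have le: "\<alpha> ^ n * (\<Sum>m<n. \<alpha> ^ m * real b ^ m) \<le> 1 / (1 - \<alpha>)"
      unfolding e using geom_rev_bound[of \<alpha> n] apos alt1 by simp
    have nn: "0 \<le> \<alpha> ^ n * (\<Sum>m<n. \<alpha> ^ m * real b ^ m)"
      using apos by (intro mult_nonneg_nonneg sum_nonneg) auto
    have "(\<Sum>m<n. \<alpha> ^ m * real b ^ m)\<^sup>2 = real b ^ n * (\<alpha> ^ n * (\<Sum>m<n. \<alpha> ^ m * real b ^ m))\<^sup>2"
      using ab_n by (simp add: power2_eq_square algebra_simps)
    also have "\<dots> \<le> real b ^ n * (1 / (1 - \<alpha>))\<^sup>2"
      using le nn by (intro mult_left_mono power_mono) auto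
    finally show ?thesis .
  qed
  finally show ?thesis by (simp add: algebra_simps)
qed

end

context coefs begin

definition \<rho> :: real where "\<rho> = sqrt \<alpha>"

lemma rho: "0 < \<rho>" "\<rho> < 1" "\<rho>\<^sup>2 = \<alpha>"
  using apos alt1 by (auto simp: \<rho>_def)

lemma xsq_bound:
  assumes m: "m < n" and m': "m' < n"
  shows "(\<Sum>k<b^n. \<Sum>l<b^n. (\<alpha> ^ m * \<alpha> ^ m' * G m m' k l)\<^sup>2) \<le> real b ^ n * real b ^ n * (\<alpha> ^ (n - m) * \<alpha> ^ (n - m'))"
proof -
  have "(\<Sum>k<b^n. \<Sum>l<b^n. (\<alpha> ^ m * \<alpha> ^ m' * G m m' k l)\<^sup>2) \<le>
        (\<Sum>k<b^n. \<Sum>l<b^n. (\<alpha> ^ m * \<alpha> ^ m')\<^sup>2 * real b ^ min m m' * G m m' k l)"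
  proof (intro sum_mono)
    fix k l
    have "G m m' k l * G m m' k l \<le> real b ^ min m m' * G m m' k l"
      using G_le_min[of m m' k l] m m' G_nn'[of m m' k l] by (intro mult_right_mono) auto
    then have "(\<alpha> ^ m * \<alpha> ^ m')\<^sup>2 * (G m m' k l * G m m' k l) \<le> (\<alpha> ^ m * \<alpha> ^ m')\<^sup>2 * (real b ^ min m m' * G m m' k l)"
      by (intro mult_left_mono) auto
    moreover have "(\<alpha> ^ m * \<alpha> ^ m' * G m m' k l)\<^sup>2 = (\<alpha> ^ m * \<alpha> ^ m')\<^sup>2 * (G m m' k l * G m m' k l)"
      by (simp add: power2_eq_square)
    ultimately show "(\<alpha> ^ m * \<alpha> ^ m' * G m m' k l)\<^sup>2 \<le> (\<alpha> ^ m * \<alpha> ^ m')\<^sup>2 * real b ^ min m m' * G m m' k l"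
      by (simp add: mult.assoc)
  qed
  also have "\<dots> = (\<alpha> ^ m * \<alpha> ^ m')\<^sup>2 * real b ^ min m m' * (\<Sum>k<b^n. \<Sum>l<b^n. G m m' k l)"
    by (simp add: sum_distrib_left)
  also have "\<dots> = (\<alpha> ^ m * \<alpha> ^ m')\<^sup>2 * real b ^ min m m' * (real b ^ n * real b ^ m * real b ^ m')"
    using G_total[of m m'] m m' by (simp add: G_def)
  also have "\<dots> = real b ^ n * real b ^ min m m'"
  proof -
    have "(\<alpha> ^ m * \<alpha> ^ m')\<^sup>2 * (real b ^ m * real b ^ m') = (\<alpha> ^ m * \<alpha> ^ m * real b ^ m) * (\<alpha> ^ m' * \<alpha> ^ m' * real b ^ m')"
      by (simp add: power2_eq_square algebra_simps)
    also have "\<dots> = 1" using ab1 by simp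
    finally have e1: "(\<alpha> ^ m * \<alpha> ^ m')\<^sup>2 * (real b ^ m * real b ^ m') = 1" .
    have "(\<alpha> ^ m * \<alpha> ^ m')\<^sup>2 * real b ^ min m m' * (real b ^ n * real b ^ m * real b ^ m')
        = ((\<alpha> ^ m * \<alpha> ^ m')\<^sup>2 * (real b ^ m * real b ^ m')) * (real b ^ n * real b ^ min m m')"
      by (simp add: algebra_simps)
    then show ?thesis using e1 by simp
  qed
  also have "\<dots> \<le> real b ^ n * real b ^ n * (\<alpha> ^ (n - m) * \<alpha> ^ (n - m'))"
  proof -
    have key: "real b ^ p \<le> real b ^ n * (\<alpha> ^ (n - p) * \<alpha> ^ (n - q))" if "p \<le> q" "q < n" for p q
    proof -
      have "\<alpha> ^ (n - p) \<le> \<alpha> ^ (n - q)"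
        using that apos alt1 by (intro power_decreasing) auto
      then have "\<alpha> ^ (n - p) * \<alpha> ^ (n - p) \<le> \<alpha> ^ (n - p) * \<alpha> ^ (n - q)"
        using apos by (intro mult_left_mono) auto
      moreover have "real b ^ n * (\<alpha> ^ (n - p) * \<alpha> ^ (n - p)) = real b ^ p"
      proof -
        have "real b ^ n = real b ^ (n - p) * real b ^ p" using that by (simp flip: power_add)
        then show ?thesis using ab1[of "n - p"] by (simp add: algebra_simps)
      qed
      ultimately show ?thesis using bpos
        by (metis mult_left_mono of_nat_0_le_iff zero_le_power)
    qed
    show ?thesis
    proof (cases "m \<le> m'")
      case True
      then show ?thesis using key[of m m'] m' bpos by (simp add: min_def)
    next
      case False
      then show ?thesis using key[of m' m] m bpos by (simp add: min_def mult.commute)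
    qed
  qed
  finally show ?thesis .
qed

lemma var_bound: "(\<Sum>k<b^n. \<Sum>l<b^n. (ipc k l)\<^sup>2) \<le> real b ^ n * real b ^ n * (1 / (1 - \<rho>))^4"
proof -
  define P where "P = {..<n} \<times> {..<n}"
  define w where "w p = \<rho> ^ (n - fst p) * \<rho> ^ (n - snd p)" for p
  define x where "x p k l = \<alpha> ^ fst p * \<alpha> ^ snd p * G (fst p) (snd p) k l" for p k l
  have wpos: "0 < w p" for p using rho by (simp add: w_def)
  have ipcP: "ipc k l = (\<Sum>p\<in>P. x p k l)" for k l
    unfolding ipc_expand P_def x_def by (simp add: sum.cartesian_product case_prod_beta)
  define W where "W = (\<Sum>p\<in>P. w p)"
  have W: "W = (\<Sum>m<n. \<rho> ^ (n - m))\<^sup>2"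
  proof -
    have "(\<Sum>i<n. \<Sum>j<n. \<rho> ^ (n - i) * \<rho> ^ (n - j)) = (\<Sum>p\<in>{..<n}\<times>{..<n}. \<rho> ^ (n - fst p) * \<rho> ^ (n - snd p))"
      by (simp add: sum.cartesian_product case_prod_beta)
    then show ?thesis unfolding W_def P_def w_def
      by (simp add: power2_eq_square sum_product)
  qed
  have W0: "0 \<le> W" unfolding W by simp
  have Wle: "W \<le> (1 / (1 - \<rho>))\<^sup>2"
    unfolding W using geom_rev_bound[of \<rho> n] rho
    by (intro power_mono) (auto intro!: sum_nonneg)
  have "(\<Sum>k<b^n. \<Sum>l<b^n. (ipc k l)\<^sup>2) \<le> (\<Sum>k<b^n. \<Sum>l<b^n. W * (\<Sum>p\<in>P. (x p k l)\<^sup>2 / w p))"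
    unfolding ipcP W_def by (intro sum_mono weighted_cs wpos)
  also have "\<dots> = W * (\<Sum>p\<in>P. (\<Sum>k<b^n. \<Sum>l<b^n. (x p k l)\<^sup>2) / w p)"
  proof -
    have "(\<Sum>k<b^n. \<Sum>l<b^n. (\<Sum>p\<in>P. (x p k l)\<^sup>2 / w p)) = (\<Sum>p\<in>P. \<Sum>k<b^n. \<Sum>l<b^n. (x p k l)\<^sup>2 / w p)"
      by (simp add: sum.swap[of _ P])
    moreover have "(\<Sum>k<b^n. \<Sum>l<b^n. W * (\<Sum>p\<in>P. (x p k l)\<^sup>2 / w p)) = W * (\<Sum>k<b^n. \<Sum>l<b^n. (\<Sum>p\<in>P. (x p k l)\<^sup>2 / w p))"
      by (simp only: sum_distrib_left)
    moreover have "(\<Sum>p\<in>P. \<Sum>k<b^n. \<Sum>l<b^n. (x p k l)\<^sup>2 / w p) = (\<Sum>p\<in>P. (\<Sum>k<b^n. \<Sum>l<b^n. (x p k l)\<^sup>2) / w p)"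
      by (simp only: sum_divide_distrib)
    ultimately show ?thesis by simp
  qed
  also have "\<dots> \<le> W * (\<Sum>p\<in>P. real b ^ n * real b ^ n * w p)"
  proof (intro mult_left_mono W0 sum_mono)
    fix p assume p: "p \<in> P"
    obtain m m' where pm: "p = (m, m')" "m < n" "m' < n" using p by (auto simp: P_def)
    have "(\<Sum>k<b^n. \<Sum>l<b^n. (x p k l)\<^sup>2) \<le> real b ^ n * real b ^ n * (w p * w p)"
    proof -
      have "w p * w p = \<alpha> ^ (n - m) * \<alpha> ^ (n - m')"
        using rho(3) by (simp add: w_def pm power2_eq_square power_mult_distrib[symmetric] algebra_simps
            flip: power_mult_distrib)
      then show ?thesis using xsq_bound[OF pm(2,3)] by (simp add: x_def pm)
    qed
    then show "(\<Sum>k<b^n. \<Sum>l<b^n. (x p k l)\<^sup>2) / w p \<le> real b ^ n * real b ^ n * w p"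
      using wpos[of p] by (simp add: divide_le_eq algebra_simps)
  qed
  also have "\<dots> = real b ^ n * real b ^ n * W * W"
    by (simp add: W_def sum_distrib_left[symmetric] sum_distrib_right[symmetric] algebra_simps)
  also have "\<dots> \<le> real b ^ n * real b ^ n * (1 / (1 - \<rho>))\<^sup>2 * (1 / (1 - \<rho>))\<^sup>2"
    using Wle W0 by (intro mult_mono) auto
  finally show ?thesis by (simp add: power2_eq_square eval_nat_numeral algebra_simps)
qed

end

lemma (in prob_space) AE_summable_exp:
  fixes f :: "nat \<Rightarrow> 'a \<Rightarrow> real"
  assumes meas: "\<And>n. f n \<in> borel_measurable M" and nn: "\<And>n \<omega>. 0 \<le> f n \<omega>"
    and int: "\<And>n. integrable M (f n)" and sm: "summable (\<lambda>n. expectation (f n))"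
  shows "AE \<omega> in M. summable (\<lambda>n. f n \<omega>)"
proof -
  have "(\<integral>\<^sup>+\<omega>. (\<Sum>n. ennreal (f n \<omega>)) \<partial>M) = (\<Sum>n. \<integral>\<^sup>+\<omega>. ennreal (f n \<omega>) \<partial>M)"
    by (rule nn_integral_suminf) (use meas in auto)
  also have "\<dots> = (\<Sum>n. ennreal (expectation (f n)))"
    by (intro suminf_cong nn_integral_eq_integral int) (auto simp: nn)
  also have "\<dots> = ennreal (\<Sum>n. expectation (f n))"
    by (rule suminf_ennreal2[OF _ sm]) (auto intro!: integral_nonneg_AE simp: nn)
  finally have fin: "(\<integral>\<^sup>+\<omega>. (\<Sum>n. ennreal (f n \<omega>)) \<partial>M) \<noteq> \<infinity>" by simp
  have "AE \<omega> in M. (\<Sum>n. ennreal (f n \<omega>)) \<noteq> \<infinity>"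
    by (rule nn_integral_PInf_AE[OF _ fin]) (use meas in auto)
  then show ?thesis
    by eventually_elim (rule summable_suminf_not_top[OF nn], simp)
qed

lemma summable_n4_geom:
  fixes \<theta> :: real assumes "0 \<le> \<theta>" "\<theta> < 1"
  shows "summable (\<lambda>n. real n ^ 4 * \<theta> ^ n)"
proof -
  define r where "r = sqrt \<theta>"
  define s where "s = sqrt (sqrt r)"
  have r: "0 \<le> r" "r < 1" "r * r = \<theta>" using assms by (auto simp: r_def)
  have s4: "s ^ 4 = r"
  proof -
    have "s ^ 4 = (sqrt (sqrt r) ^ 2) ^ 2" by (simp add: s_def flip: power_mult)
    also have "\<dots> = r" using r by simp
    finally show ?thesis .
  qed
  have s: "0 \<le> s" "s < 1" "s ^ 4 = r" using r s4 by (auto simp: s_def)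
  have "(\<lambda>n. real n * s ^ n) \<longlonglongrightarrow> 0"
    using powser_times_n_limit_0[of s] s by simp
  then have "(\<lambda>n. (real n * s ^ n) ^ 4) \<longlonglongrightarrow> 0 ^ 4"
    by (intro tendsto_power)
  moreover have "(real n * s ^ n) ^ 4 = real n ^ 4 * r ^ n" for n
    using s by (simp add: power_mult_distrib power_mult[symmetric] mult.commute[of n 4] power_mult)
  ultimately have lim: "(\<lambda>n. real n ^ 4 * r ^ n) \<longlonglongrightarrow> 0" by simp
  then have ev: "eventually (\<lambda>n. real n ^ 4 * r ^ n < 1) sequentially"
    by (rule order_tendstoD) simp
  have "summable (\<lambda>n. r ^ n)" using r by (intro summable_geometric) simp
  moreover have "eventually (\<lambda>n. norm (real n ^ 4 * \<theta> ^ n) \<le> r ^ n) sequentially"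
    using ev
  proof eventually_elim
    case (elim n)
    have "real n ^ 4 * \<theta> ^ n = (real n ^ 4 * r ^ n) * r ^ n"
      using r by (simp add: power_mult_distrib[symmetric])
    also have "\<dots> \<le> 1 * r ^ n"
      using elim r by (intro mult_right_mono) auto
    finally show ?case using assms by simp
  qed
  ultimately show ?thesis
    by (rule summable_comparison_test_ev[rotated])
qed

lemma block_tel:
  fixes g :: "nat \<Rightarrow> real"
  assumes "r < A"
  shows "(\<Sum>i<A*B. (if i div B = r then 1 else 0) * (g (Suc i) - g i)) = g ((r+1)*B) - g (r*B)"
proof (cases "B = 0")
  case True then show ?thesis by simp
next
  case False
  have "(\<Sum>i<A*B. (if i div B = r then 1 else 0) * (g (Suc i) - g i)) =
     (\<Sum>R<A. \<Sum>s<B. (if (R*B+s) div B = r then 1 else 0) * (g (Suc (R*B+s)) - g (R*B+s)))"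
    by (rule sum_divmod_split)
  also have "\<dots> = (\<Sum>R<A. if R = r then (\<Sum>s<B. g (Suc (r*B+s)) - g (r*B+s)) else 0)"
    using False by (intro sum.cong refl) auto
  also have "\<dots> = (\<Sum>s<B. g (Suc (r*B+s)) - g (r*B+s))"
    using assms by simp
  also have "\<dots> = g (r*B + B) - g (r*B + 0)"
    using sum_lessThan_telescope[of "\<lambda>s. g (r*B+s)" B] by simp
  finally show ?thesis by (simp add: add.commute)
qed

lemma bm_level:
  assumes BM: "brownian_motion M W" and b: "0 < b"
  shows "gfam M (\<lambda>i \<omega>. W ((real i + 1) / real b ^ n) \<omega> - W (real i / real b ^ n) \<omega>) {..<b^n} (sqrt (1 / real b ^ n))"
proof -
  interpret prob_space M using BM by (simp add: brownian_motion_def)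
  define u where "u i = real i / real b ^ n" for i
  have u: "0 \<le> u 0" "\<forall>i<b^n. u i < u (Suc i)" using b by (auto simp: u_def divide_strict_right_mono)
  have ind: "indep_vars (\<lambda>_. borel) (\<lambda>i \<omega>. W (u (Suc i)) \<omega> - W (u i) \<omega>) {..<b^n}"
    using BM u unfolding brownian_motion_def by blast
  have us: "u (Suc i) = (real i + 1) / real b ^ n" for i by (simp add: u_def)
  show ?thesis
  proof
    show "finite {..<b^n}" by simp
    show "indep_vars (\<lambda>_. borel) (\<lambda>i \<omega>. W ((real i + 1) / real b ^ n) \<omega> - W (real i / real b ^ n) \<omega>) {..<b^n}"
      using ind by (simp add: us u_def add.commute)
    show "0 < sqrt (1 / real b ^ n)" using b by simp
    fix i assume "i \<in> {..<b^n}"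
    have lt: "real i / real b ^ n < (real i + 1) / real b ^ n" using b by (simp add: divide_strict_right_mono)
    have e: "(real i + 1) / real b ^ n - real i / real b ^ n = 1 / real b ^ n" by (simp add: diff_divide_distrib[symmetric])
    have all: "\<forall>s t. 0 \<le> s \<and> s < t \<longrightarrow>
        distributed M lborel (\<lambda>\<omega>. W t \<omega> - W s \<omega>) (normal_density 0 (sqrt (t - s)))"
      using BM unfolding brownian_motion_def by blast
    have "0 \<le> real i / real b ^ n" by simp
    from all[rule_format, OF conjI[OF this lt]] show "distributed M lborel (\<lambda>\<omega>. W ((real i + 1) / real b ^ n) \<omega> - W (real i / real b ^ n) \<omega>)
        (\<lambda>x. ennreal (normal_density 0 (sqrt (1 / real b ^ n)) x))"
      unfolding e .
  qed
qed

definition DWf :: "(real \<Rightarrow> 'a \<Rightarrow> real) \<Rightarrow> real \<Rightarrow> nat \<Rightarrow> nat \<Rightarrow> nat \<Rightarrow> 'a \<Rightarrow> real" where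
  "DWf W \<alpha> b n k \<omega> = (\<Sum>m<n. \<alpha> ^ m * (W ((real (k mod b ^ (n - m)) + 1) / real b ^ (n - m)) \<omega>
                                     - W (real (k mod b ^ (n - m)) / real b ^ (n - m)) \<omega>))"

lemma block_W:
  fixes g :: "real \<Rightarrow> real" and b :: nat
  assumes b: "0 < b" and m: "m \<le> n"
  shows "(\<Sum>i<b^n. (if i div b ^ m = k mod b ^ (n - m) then 1 else 0) * (g ((real i + 1) / real b ^ n) - g (real i / real b ^ n)))
     = g ((real (k mod b ^ (n - m)) + 1) / real b ^ (n - m)) - g (real (k mod b ^ (n - m)) / real b ^ (n - m))"
proof -
  define r where "r = k mod b ^ (n - m)"
  have r: "r < b ^ (n - m)" using b by (simp add: r_def)
  have bn: "b ^ n = b ^ (n - m) * b ^ m" using m by (simp flip: power_add)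
  have "(\<Sum>i<b ^ (n - m) * b ^ m. (if i div b ^ m = r then 1 else 0) * ((\<lambda>i. g (real i / real b ^ n)) (Suc i) - (\<lambda>i. g (real i / real b ^ n)) i))
     = g (real ((r+1) * b ^ m) / real b ^ n) - g (real (r * b ^ m) / real b ^ n)"
    by (rule block_tel[OF r])
  moreover have "real ((r+1) * b ^ m) / real b ^ n = (real r + 1) / real b ^ (n - m)"
    "real (r * b ^ m) / real b ^ n = real r / real b ^ (n - m)"
  proof -
    have bnr: "real b ^ n = real b ^ (n - m) * real b ^ m" using bn by (metis of_nat_mult of_nat_power)
    show "real ((r+1) * b ^ m) / real b ^ n = (real r + 1) / real b ^ (n - m)"
      "real (r * b ^ m) / real b ^ n = real r / real b ^ (n - m)"
      using b unfolding bnr by (simp_all add: field_simps)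
  qed
  ultimately show ?thesis unfolding bn r_def by (simp add: add.commute)
qed

lemma DW_lin:
  assumes b: "0 < b"
  shows "DWf W \<alpha> b n k \<omega> = (\<Sum>i<b^n. (\<Sum>m<n. \<alpha> ^ m * (if i div b ^ m = k mod b ^ (n - m) then 1 else 0)) *
             (W ((real i + 1) / real b ^ n) \<omega> - W (real i / real b ^ n) \<omega>))"
proof -
  have "(\<Sum>i<b^n. (\<Sum>m<n. \<alpha> ^ m * (if i div b ^ m = k mod b ^ (n - m) then 1 else 0)) *
             (W ((real i + 1) / real b ^ n) \<omega> - W (real i / real b ^ n) \<omega>))
    = (\<Sum>m<n. \<alpha> ^ m * (\<Sum>i<b^n. (if i div b ^ m = k mod b ^ (n - m) then 1 else 0) *
             (W ((real i + 1) / real b ^ n) \<omega> - W (real i / real b ^ n) \<omega>)))"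
    by (simp add: sum_distrib_right sum_distrib_left sum.swap[of _ "{..<b^n}"] mult.assoc)
  also have "\<dots> = DWf W \<alpha> b n k \<omega>"
    unfolding DWf_def using block_W[OF b, where g="\<lambda>x. W x \<omega>" and n=n and k=k] by (intro sum.cong refl) simp
  finally show ?thesis by simp
qed

definition Kf :: "(real \<Rightarrow> real) \<Rightarrow> real \<Rightarrow> nat \<Rightarrow> nat \<Rightarrow> nat \<Rightarrow> real" where
  "Kf \<kappa> \<alpha> b n k = (\<Sum>m<n. \<alpha> ^ m * (\<kappa> ((real (k mod b ^ (n - m)) + 1) / real b ^ (n - m))
                                    - \<kappa> (real (k mod b ^ (n - m)) / real b ^ (n - m))))"

locale wws =
  fixes M :: "'a measure" and W :: "real \<Rightarrow> 'a \<Rightarrow> real" and \<kappa> :: "real \<Rightarrow> real"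
    and \<tau> \<alpha> :: real and b :: nat
  assumes BM: "brownian_motion M W"
    and kappa_range: "\<forall>t\<in>{0..1}. \<kappa> t \<in> {0..1}"
    and kappa0: "\<kappa> 0 = 0" and kappa1: "\<kappa> 1 = 1"
    and tau: "1/2 < \<tau>" "\<tau> \<le> 1"
    and kappa_hoelder: "hoelder_on01 \<tau> \<kappa>"
    and alpha: "0 < \<alpha>" "\<alpha> < 1"
    and b: "2 \<le> b"
    and crit: "\<alpha>\<^sup>2 * real b = 1"
begin

sublocale prob_space M using BM by (simp add: brownian_motion_def)

lemma W0: "\<omega> \<in> space M \<Longrightarrow> W 0 \<omega> = 0" using BM by (simp add: brownian_motion_def)

lemma bpos: "0 < b" using b by simp

lemma coefs: "coefs \<alpha> b" using b alpha crit by unfold_locales auto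

lemma DX_eq:
  assumes \<omega>: "\<omega> \<in> space M"
  shows "ww_bridge W \<kappa> \<alpha> b ((real k + 1) / real b ^ n) \<omega> - ww_bridge W \<kappa> \<alpha> b (real k / real b ^ n) \<omega>
    = DWf W \<alpha> b n k \<omega> - W 1 \<omega> * Kf \<kappa> \<alpha> b n k"
proof -
  have b1: "1 \<le> b" using b by simp
  have "ww_bridge W \<kappa> \<alpha> b ((real k + 1) / real b ^ n) \<omega> - ww_bridge W \<kappa> \<alpha> b (real k / real b ^ n) \<omega>
    = (\<Sum>m<n. \<alpha> ^ m * (bridge W \<kappa> ((real (k mod b ^ (n - m)) + 1) / real b ^ (n - m)) \<omega> -
                              bridge W \<kappa> (real (k mod b ^ (n - m)) / real b ^ (n - m)) \<omega>))"
    unfolding ww_bridge_def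
    by (rule ww_incr[OF b1, where f="\<lambda>t. bridge W \<kappa> t \<omega>"])
       (auto simp: bridge_def W0[OF \<omega>] kappa0 kappa1)
  also have "\<dots> = DWf W \<alpha> b n k \<omega> - W 1 \<omega> * Kf \<kappa> \<alpha> b n k"
    unfolding DWf_def Kf_def sum_distrib_left sum_subtractf[symmetric]
    by (intro sum.cong refl) (simp add: bridge_def algebra_simps)
  finally show ?thesis .
qed

definition CH where "CH = (SOME C. \<forall>s\<in>{0..1}. \<forall>t\<in>{0..1}. \<bar>\<kappa> s - \<kappa> t\<bar> \<le> C * \<bar>s - t\<bar> powr \<tau>)"

lemma CH: "\<forall>s\<in>{0..1}. \<forall>t\<in>{0..1}. \<bar>\<kappa> s - \<kappa> t\<bar> \<le> CH * \<bar>s - t\<bar> powr \<tau>"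
  using kappa_hoelder unfolding hoelder_on01_def CH_def by (rule someI_ex)

lemma CH_pos: "0 \<le> CH"
proof -
  have "\<bar>\<kappa> 1 - \<kappa> 0\<bar> \<le> CH * \<bar>1 - 0\<bar> powr \<tau>" using CH[rule_format, of 1 0] by simp
  then show ?thesis using kappa0 kappa1 by simp
qed

definition \<gamma> where "\<gamma> = real b powr (1/2 - \<tau>)"

lemma gamma: "0 \<le> \<gamma>" "\<gamma> < 1"
  using b tau by (auto simp: \<gamma>_def powr_less_one)

definition CK where "CK = CH / (1 - \<gamma>)"

lemma CK_nn: "0 \<le> CK" using CH_pos gamma by (simp add: CK_def)

lemma alpha_inv: "1 / \<alpha> = real b powr (1/2)"
proof -
  have "(1 / \<alpha>)\<^sup>2 = real b" using crit alpha by (simp add: field_simps)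
  then have "1 / \<alpha> = sqrt (real b)" using alpha by (metis less_eq_real_def real_sqrt_unique zero_le_divide_1_iff)
  then show ?thesis using bpos by (simp add: powr_half_sqrt)
qed

lemma term_eq:
  assumes "m \<le> n"
  shows "\<alpha> ^ m * (1 / real b ^ (n - m)) powr \<tau> = \<alpha> ^ n * \<gamma> ^ (n - m)"
proof -
  have an: "\<alpha> ^ n = \<alpha> ^ m * \<alpha> ^ (n - m)" using assms by (simp flip: power_add)
  have "\<alpha> ^ m = \<alpha> ^ n * (1 / \<alpha>) ^ (n - m)" using alpha unfolding an by (simp add: field_simps)
  also have "\<dots> = \<alpha> ^ n * (real b powr (1/2)) ^ (n - m)" by (simp add: alpha_inv)
  finally have am: "\<alpha> ^ m = \<alpha> ^ n * (real b powr (1/2)) ^ (n - m)" .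
  have kk: "(1 / real b ^ (n - m)) powr \<tau> = (real b powr (- \<tau>)) ^ (n - m)"
    using bpos by (smt (verit) powr_gt_zero powr_minus_divide powr_powr_swap powr_realpow of_nat_0_less_iff)
  have "(real b powr (1/2)) ^ (n - m) * (real b powr (- \<tau>)) ^ (n - m) = \<gamma> ^ (n - m)"
    unfolding \<gamma>_def by (simp add: power_mult_distrib[symmetric] powr_add[symmetric])
  then show ?thesis unfolding am kk by (simp add: algebra_simps)
qed

lemma K_bound: "\<bar>Kf \<kappa> \<alpha> b n k\<bar> \<le> CK * \<alpha> ^ n"
proof -
  have "\<bar>Kf \<kappa> \<alpha> b n k\<bar> \<le> (\<Sum>m<n. \<bar>\<alpha> ^ m * (\<kappa> ((real (k mod b ^ (n - m)) + 1) / real b ^ (n - m))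
                                    - \<kappa> (real (k mod b ^ (n - m)) / real b ^ (n - m)))\<bar>)"
    unfolding Kf_def by (rule sum_abs)
  also have "\<dots> \<le> (\<Sum>m<n. CH * (\<alpha> ^ n * \<gamma> ^ (n - m)))"
  proof (rule sum_mono)
    fix m assume m: "m \<in> {..<n}"
    define r where "r = k mod b ^ (n - m)"
    have r: "real r + 1 \<le> real b ^ (n - m)"
    proof -
      have "r < b ^ (n - m)" using bpos by (simp add: r_def)
      then have "r + 1 \<le> b ^ (n - m)" by simp
      then show ?thesis by (metis of_nat_1 of_nat_add of_nat_le_iff of_nat_power)
    qed
    have bp: "0 < real b ^ (n - m)" using bpos by simp
    have in1: "(real r + 1) / real b ^ (n - m) \<in> {0..1}" "real r / real b ^ (n - m) \<in> {0..1}"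
    proof -
      have "real r \<le> real b ^ (n - m)" using r by linarith
      then show "(real r + 1) / real b ^ (n - m) \<in> {0..1}" "real r / real b ^ (n - m) \<in> {0..1}"
        using r bp by (simp_all add: divide_le_eq_1_pos)
    qed
    have d: "\<bar>(real r + 1) / real b ^ (n - m) - real r / real b ^ (n - m)\<bar> = 1 / real b ^ (n - m)"
      using bp by (simp add: diff_divide_distrib[symmetric])
    have "\<bar>\<kappa> ((real r + 1) / real b ^ (n - m)) - \<kappa> (real r / real b ^ (n - m))\<bar> \<le> CH * (1 / real b ^ (n - m)) powr \<tau>"
      using CH[rule_format, OF in1] unfolding d .
    then have "\<bar>\<alpha> ^ m * (\<kappa> ((real r + 1) / real b ^ (n - m)) - \<kappa> (real r / real b ^ (n - m)))\<bar>
        \<le> \<alpha> ^ m * (CH * (1 / real b ^ (n - m)) powr \<tau>)"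
      using alpha by (simp add: abs_mult mult_left_mono)
    also have "\<dots> = CH * (\<alpha> ^ n * \<gamma> ^ (n - m))"
      using term_eq[of m] m by (simp add: algebra_simps)
    finally show "\<bar>\<alpha> ^ m * (\<kappa> ((real (k mod b ^ (n - m)) + 1) / real b ^ (n - m))
                                    - \<kappa> (real (k mod b ^ (n - m)) / real b ^ (n - m)))\<bar> \<le> CH * (\<alpha> ^ n * \<gamma> ^ (n - m))"
      by (simp add: r_def)
  qed
  also have "\<dots> = CH * \<alpha> ^ n * (\<Sum>m<n. \<gamma> ^ (n - m))"
    by (simp add: sum_distrib_left algebra_simps)
  also have "\<dots> \<le> CH * \<alpha> ^ n * (1 / (1 - \<gamma>))"
    using geom_rev_bound[OF gamma] CH_pos alpha by (intro mult_left_mono) auto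
  finally show ?thesis by (simp add: CK_def)
qed

end

context wws begin

definition \<xi> :: "nat \<Rightarrow> nat \<Rightarrow> 'a \<Rightarrow> real" where
  "\<xi> n i \<omega> = W ((real i + 1) / real b ^ n) \<omega> - W (real i / real b ^ n) \<omega>"

definition sN :: "nat \<Rightarrow> real" where "sN n = sqrt (1 / real b ^ n)"

lemma lev: "gfam M (\<xi> n) {..<b^n} (sN n)"
  unfolding \<xi>_def[abs_def] sN_def using bm_level[OF BM bpos] .

lemma sN2: "(sN n)\<^sup>2 = 1 / real b ^ n" by (simp add: sN_def)
lemma sN4: "(sN n) ^ 4 = 1 / (real b ^ n * real b ^ n)"
proof -
  have "(sN n) ^ 4 = ((sN n)\<^sup>2)\<^sup>2" by (simp flip: power_mult)
  then show ?thesis unfolding sN2 by (simp add: power2_eq_square)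
qed

lemma DW_is_lin: "DWf W \<alpha> b n k \<omega> = gfam.lin (\<xi> n) {..<b^n} (coefs.cf \<alpha> b n k) \<omega>"
  unfolding DW_lin[OF bpos] gfam.lin_def[OF lev] coefs.cf_def[OF coefs] coefs.ee_def[OF coefs] \<xi>_def
  by simp

lemma nrm_is: "gfam.nrm {..<b^n} (coefs.cf \<alpha> b n k) = coefs.ipc \<alpha> b n k k"
  unfolding gfam.nrm_def[OF lev] coefs.ipc_def[OF coefs] by (simp add: power2_eq_square)

lemma ip_is: "gfam.ip {..<b^n} (coefs.cf \<alpha> b n k) (coefs.cf \<alpha> b n l) = coefs.ipc \<alpha> b n k l"
  unfolding gfam.ip_def[OF lev] coefs.ipc_def[OF coefs] by simp

lemma DW_meas: "(\<lambda>\<omega>. DWf W \<alpha> b n k \<omega>) \<in> borel_measurable M"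
  unfolding DW_is_lin using gfam.lin_meas[OF lev] by simp

end

context wws begin

definition Mt :: "real \<Rightarrow> nat \<Rightarrow> nat" where "Mt t n = nat \<lfloor>t * real b ^ n\<rfloor>"

definition QW :: "real \<Rightarrow> nat \<Rightarrow> 'a \<Rightarrow> real" where
  "QW t n \<omega> = (\<Sum>k<Mt t n. (DWf W \<alpha> b n k \<omega>)\<^sup>2)"

definition mW :: "real \<Rightarrow> nat \<Rightarrow> real" where
  "mW t n = (sN n)\<^sup>2 * (\<Sum>k<Mt t n. coefs.ipc \<alpha> b n k k)"

definition Cv :: real where "Cv = (1 / (1 - coefs.\<rho> \<alpha>)) ^ 4"

lemma Mt_le: "t \<le> 1 \<Longrightarrow> Mt t n \<le> b ^ n"
proof -
  assume t: "t \<le> 1"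
  have "0 \<le> (1 - t) * real b ^ n" using t by simp
  then have "t * real b ^ n \<le> real (b ^ n)" by (simp add: algebra_simps)
  then have "\<lfloor>t * real b ^ n\<rfloor> \<le> int (b ^ n)"
    by (metis floor_mono floor_of_nat of_int_of_nat_eq)
  then show ?thesis unfolding Mt_def by (simp add: nat_le_iff)
qed

lemma QW_lin: "QW t n \<omega> = (\<Sum>k\<in>{..<Mt t n}. (gfam.lin (\<xi> n) {..<b^n} (coefs.cf \<alpha> b n k) \<omega>)\<^sup>2)"
  unfolding QW_def DW_is_lin by simp

lemma var_QW:
  assumes t: "t \<le> 1"
  shows "integrable M (\<lambda>\<omega>. (QW t n \<omega> - mW t n)\<^sup>2)"
    "expectation (\<lambda>\<omega>. (QW t n \<omega> - mW t n)\<^sup>2) \<le> 2 * Cv"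
proof -
  have mW: "mW t n = (sN n)\<^sup>2 * (\<Sum>k\<in>{..<Mt t n}. gfam.nrm {..<b^n} (coefs.cf \<alpha> b n k))"
    unfolding mW_def nrm_is by simp
  show "integrable M (\<lambda>\<omega>. (QW t n \<omega> - mW t n)\<^sup>2)"
    unfolding QW_lin mW by (rule gfam.quad_var(1)[OF lev]) simp
  have "expectation (\<lambda>\<omega>. (QW t n \<omega> - mW t n)\<^sup>2) =
      2 * (sN n) ^ 4 * (\<Sum>k\<in>{..<Mt t n}. \<Sum>l\<in>{..<Mt t n}. (coefs.ipc \<alpha> b n k l)\<^sup>2)"
  proof -
    have "expectation (\<lambda>\<omega>. ((\<Sum>k\<in>{..<Mt t n}. (gfam.lin (\<xi> n) {..<b^n} (coefs.cf \<alpha> b n k) \<omega>)\<^sup>2) -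
        (sN n)\<^sup>2 * (\<Sum>k\<in>{..<Mt t n}. gfam.nrm {..<b^n} (coefs.cf \<alpha> b n k)))\<^sup>2) =
      2 * (sN n) ^ 4 * (\<Sum>k\<in>{..<Mt t n}. \<Sum>l\<in>{..<Mt t n}. (gfam.ip {..<b^n} (coefs.cf \<alpha> b n k) (coefs.cf \<alpha> b n l))\<^sup>2)"
      by (rule gfam.quad_var(2)[OF lev]) simp
    then show ?thesis unfolding QW_lin mW ip_is .
  qed
  also have "\<dots> \<le> 2 * (sN n) ^ 4 * (\<Sum>k<b^n. \<Sum>l<b^n. (coefs.ipc \<alpha> b n k l)\<^sup>2)"
  proof -
    have "(\<Sum>k\<in>{..<Mt t n}. \<Sum>l\<in>{..<Mt t n}. (coefs.ipc \<alpha> b n k l)\<^sup>2) \<le> (\<Sum>k\<in>{..<Mt t n}. \<Sum>l<b^n. (coefs.ipc \<alpha> b n k l)\<^sup>2)"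
      using Mt_le[OF t] by (intro sum_mono sum_mono2) auto
    also have "\<dots> \<le> (\<Sum>k<b^n. \<Sum>l<b^n. (coefs.ipc \<alpha> b n k l)\<^sup>2)"
      using Mt_le[OF t] by (intro sum_mono2 sum_nonneg) auto
    finally show ?thesis by (intro mult_left_mono) auto
  qed
  also have "\<dots> \<le> 2 * (sN n) ^ 4 * (real b ^ n * real b ^ n * Cv)"
    using coefs.var_bound[OF coefs, of n] by (intro mult_left_mono) (auto simp: Cv_def)
  also have "\<dots> = 2 * Cv" using bpos by (simp add: sN4)
  finally show "expectation (\<lambda>\<omega>. (QW t n \<omega> - mW t n)\<^sup>2) \<le> 2 * Cv" .
qed

lemma QW_meas: "(\<lambda>\<omega>. QW t n \<omega>) \<in> borel_measurable M"
  unfolding QW_def using DW_meas by measurable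

lemma AE_QW_dev:
  assumes t: "t \<le> 1"
  shows "AE \<omega> in M. (\<lambda>n. (QW t n \<omega> - mW t n) / real n) \<longlonglongrightarrow> 0"
proof -
  define f where "f n \<omega> = (QW t n \<omega> - mW t n)\<^sup>2 / (real n)\<^sup>2" for n \<omega>
  have fm: "f n \<in> borel_measurable M" for n unfolding f_def[abs_def] using QW_meas by measurable
  have fi: "integrable M (f n)" for n unfolding f_def[abs_def] using var_QW(1)[OF t] by simp
  have fe: "expectation (f n) \<le> 2 * Cv * inverse (real n ^ 2)" for n
    unfolding f_def using var_QW(2)[OF t, of n] by (simp add: divide_right_mono field_simps)
  have sm: "summable (\<lambda>n. expectation (f n))"
  proof (rule summable_comparison_test')
    show "summable (\<lambda>n. 2 * Cv * inverse (real n ^ 2))"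
      by (intro summable_mult inverse_power_summable) simp
    show "norm (expectation (f n)) \<le> 2 * Cv * inverse (real n ^ 2)" for n
    proof -
      have "0 \<le> expectation (f n)" by (intro integral_nonneg_AE) (simp add: f_def)
      then show ?thesis using fe[of n] by simp
    qed
  qed
  have "AE \<omega> in M. summable (\<lambda>n. f n \<omega>)"
    by (rule AE_summable_exp[OF fm _ fi sm]) (simp add: f_def)
  then show ?thesis
  proof eventually_elim
    case (elim \<omega>)
    have "(\<lambda>n. f n \<omega>) \<longlonglongrightarrow> 0" using elim by (rule summable_LIMSEQ_zero)
    then have "(\<lambda>n. sqrt (f n \<omega>)) \<longlonglongrightarrow> sqrt 0" by (intro tendsto_real_sqrt)
    moreover have "sqrt (f n \<omega>) = \<bar>(QW t n \<omega> - mW t n) / real n\<bar>" for n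
      unfolding f_def by (simp add: real_sqrt_divide power_divide[symmetric])
    ultimately have "(\<lambda>n. \<bar>(QW t n \<omega> - mW t n) / real n\<bar>) \<longlonglongrightarrow> 0" by simp
    then show ?case by (rule tendsto_rabs_zero_cancel)
  qed
qed

end

context wws begin

definition Cm :: real where "Cm = (1 / (1 - \<alpha>))\<^sup>2"

lemma Mt_bounds:
  assumes "0 \<le> t"
  shows "t * real b ^ n - 1 < real (Mt t n)" "real (Mt t n) \<le> t * real b ^ n"
proof -
  have nn: "0 \<le> \<lfloor>t * real b ^ n\<rfloor>" using assms by simp
  have e: "real (Mt t n) = real_of_int \<lfloor>t * real b ^ n\<rfloor>" unfolding Mt_def using nn by simp
  show "t * real b ^ n - 1 < real (Mt t n)" unfolding e by linarith
  show "real (Mt t n) \<le> t * real b ^ n" unfolding e by linarith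
qed

lemma Mt_ratio_lim: assumes "0 \<le> t" shows "(\<lambda>n. real (Mt t n) / real b ^ n) \<longlonglongrightarrow> t"
proof (rule tendsto_sandwich)
  have bp: "0 < real b ^ n" for n using bpos by simp
  show "eventually (\<lambda>n. t - (1 / real b) ^ n \<le> real (Mt t n) / real b ^ n) sequentially"
  proof (intro always_eventually allI)
    fix n
    have "t - (1 / real b) ^ n = (t * real b ^ n - 1) / real b ^ n"
      using bp[of n] by (simp add: field_simps power_one_over)
    also have "\<dots> \<le> real (Mt t n) / real b ^ n"
      using Mt_bounds(1)[OF assms, of n] bp[of n] by (intro divide_right_mono) auto
    finally show "t - (1 / real b) ^ n \<le> real (Mt t n) / real b ^ n" .
  qed
  show "eventually (\<lambda>n. real (Mt t n) / real b ^ n \<le> t) sequentially"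
    using Mt_bounds(2)[OF assms] bp by (intro always_eventually allI) (simp add: field_simps)
  have "(\<lambda>n. (1 / real b) ^ n) \<longlonglongrightarrow> 0" using b by (intro LIMSEQ_power_zero) simp
  then show "(\<lambda>n. t - (1 / real b) ^ n) \<longlonglongrightarrow> t" using tendsto_diff[of "\<lambda>_. t" t] by fastforce
qed simp

lemma mW_bounds:
  assumes t: "0 \<le> t" "t \<le> 1"
  shows "real (Mt t n) * real n / real b ^ n \<le> mW t n"
    "mW t n \<le> real (Mt t n) * real n / real b ^ n + Cm"
proof -
  have bp: "0 < real b ^ n" using bpos by simp
  have "real (Mt t n) * real n \<le> (\<Sum>k<Mt t n. coefs.ipc \<alpha> b n k k)"
    using sum_mono[of "{..<Mt t n}" "\<lambda>_. real n" "\<lambda>k. coefs.ipc \<alpha> b n k k"] coefs.ipc_diag_ge[OF coefs] by simp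
  then show "real (Mt t n) * real n / real b ^ n \<le> mW t n"
    unfolding mW_def sN2 using bp by (simp add: divide_right_mono)
  have "(\<Sum>k<Mt t n. coefs.ipc \<alpha> b n k k) = (\<Sum>k<Mt t n. coefs.ipc \<alpha> b n k k - real n) + real (Mt t n) * real n"
    by (simp add: sum_subtractf)
  also have "(\<Sum>k<Mt t n. coefs.ipc \<alpha> b n k k - real n) \<le> (\<Sum>k<b^n. coefs.ipc \<alpha> b n k k - real n)"
    using Mt_le[OF t(2)] coefs.ipc_diag_ge[OF coefs] by (intro sum_mono2) auto
  also have "\<dots> = (\<Sum>k<b^n. coefs.ipc \<alpha> b n k k) - real b ^ n * real n"
    by (simp add: sum_subtractf)
  also have "\<dots> \<le> real b ^ n * Cm"
    using coefs.mean_upper[OF coefs, of n] by (simp add: Cm_def algebra_simps)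
  finally have "(\<Sum>k<Mt t n. coefs.ipc \<alpha> b n k k) \<le> real b ^ n * Cm + real (Mt t n) * real n" by simp
  then show "mW t n \<le> real (Mt t n) * real n / real b ^ n + Cm"
    unfolding mW_def sN2 using bp by (simp add: field_simps)
qed

lemma mW_lim: assumes t: "0 \<le> t" "t \<le> 1" shows "(\<lambda>n. mW t n / real n) \<longlonglongrightarrow> t"
proof (rule tendsto_sandwich)
  show "eventually (\<lambda>n. real (Mt t n) / real b ^ n \<le> mW t n / real n) sequentially"
    using eventually_gt_at_top[of "0::nat"]
  proof eventually_elim
    case (elim n)
    then show ?case using mW_bounds(1)[OF t, of n] by (simp add: field_simps)
  qed
  show "eventually (\<lambda>n. mW t n / real n \<le> real (Mt t n) / real b ^ n + Cm * (1 / real n)) sequentially"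
    using eventually_gt_at_top[of "0::nat"]
  proof eventually_elim
    case (elim n)
    then show ?case using mW_bounds(2)[OF t, of n] by (simp add: field_simps)
  qed
  show "(\<lambda>n. real (Mt t n) / real b ^ n) \<longlonglongrightarrow> t" by (rule Mt_ratio_lim[OF t(1)])
  have "(\<lambda>n. Cm * (1 / real n)) \<longlonglongrightarrow> Cm * 0"
    by (intro tendsto_mult tendsto_const lim_const_over_n)
  then show "(\<lambda>n. real (Mt t n) / real b ^ n + Cm * (1 / real n)) \<longlonglongrightarrow> t"
    using tendsto_add[OF Mt_ratio_lim[OF t(1)]] by fastforce
qed

lemma AE_QW_lim:
  assumes t: "0 \<le> t" "t \<le> 1"
  shows "AE \<omega> in M. (\<lambda>n. QW t n \<omega> / real n) \<longlonglongrightarrow> t"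
  using AE_QW_dev[OF t(2)]
proof eventually_elim
  case (elim \<omega>)
  have "(\<lambda>n. (QW t n \<omega> - mW t n) / real n + mW t n / real n) \<longlonglongrightarrow> 0 + t"
    by (intro tendsto_add elim mW_lim t)
  moreover have "(QW t n \<omega> - mW t n) / real n + mW t n / real n = QW t n \<omega> / real n" for n
    by (simp add: diff_divide_distrib)
  ultimately show ?case by simp
qed

end

context wws begin

definition \<beta> :: real where "\<beta> = sqrt (sqrt \<alpha>)"

lemma beta: "0 < \<beta>" "\<beta> < 1" "\<beta> ^ 4 = \<alpha>"
proof -
  show "0 < \<beta>" "\<beta> < 1" using alpha by (auto simp: \<beta>_def)
  have "\<beta> ^ 4 = (sqrt (sqrt \<alpha>) ^ 2) ^ 2" by (simp add: \<beta>_def flip: power_mult)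
  then show "\<beta> ^ 4 = \<alpha>" using alpha by simp
qed

lemma AE_DW_small:
  "AE \<omega> in M. eventually (\<lambda>n. \<forall>k<b^n. \<bar>DWf W \<alpha> b n k \<omega>\<bar> \<le> \<beta> ^ n) sequentially"
proof -
  define f where "f n \<omega> = (\<Sum>k<b^n. (DWf W \<alpha> b n k \<omega>) ^ 4) / \<alpha> ^ n" for n \<omega>
  have fm: "f n \<in> borel_measurable M" for n unfolding f_def[abs_def] using DW_meas by measurable
  have fi: "integrable M (f n)" for n
    unfolding f_def[abs_def] DW_is_lin using gfam.lin_int[OF lev] by simp
  have fe: "expectation (f n) \<le> 3 * (real n ^ 4 * \<alpha> ^ n)" for n
  proof -
    have "expectation (f n) = (\<Sum>k<b^n. 3 * (sN n) ^ 4 * (coefs.ipc \<alpha> b n k k)\<^sup>2) / \<alpha> ^ n"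
      unfolding f_def[abs_def] DW_is_lin
      using gfam.lin_int[OF lev] gfam.lin_4[OF lev] nrm_is[unfolded gfam.nrm_def[OF lev]]
      by (simp add: Bochner_Integration.integral_sum)
    also have "\<dots> \<le> (\<Sum>k<b^n. 3 * (sN n) ^ 4 * (real n ^ 2)\<^sup>2) / \<alpha> ^ n"
    proof -
      have nn: "0 \<le> coefs.ipc \<alpha> b n k k" for k using coefs.ipc_diag_ge[OF coefs, of n k] by linarith
      show ?thesis
        using alpha coefs.ipc_diag_le[OF coefs] nn
        by (intro divide_right_mono sum_mono mult_left_mono power_mono) auto
    qed
    also have "\<dots> = 3 * real n ^ 4 / (real b ^ n * \<alpha> ^ n)"
    proof -
      have "(\<Sum>k<b^n. 3 * (sN n) ^ 4 * (real n ^ 2)\<^sup>2) = real b ^ n * (3 * (sN n) ^ 4 * (real n ^ 2)\<^sup>2)"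
        by simp
      also have "(real n ^ 2)\<^sup>2 = real n ^ 4" by (simp flip: power_mult)
      also have "real b ^ n * (3 * (sN n) ^ 4 * real n ^ 4) = 3 * real n ^ 4 / real b ^ n"
        unfolding sN4 using bpos by (simp add: field_simps)
      finally show ?thesis by (simp add: field_simps)
    qed
    also have "\<dots> = 3 * (real n ^ 4 * \<alpha> ^ n)"
    proof -
      have "\<alpha> ^ n * \<alpha> ^ n * real b ^ n = 1" using coefs.ab1[OF coefs] .
      then show ?thesis using alpha bpos by (simp add: field_simps)
    qed
    finally show ?thesis .
  qed
  have sm: "summable (\<lambda>n. expectation (f n))"
  proof (rule summable_comparison_test')
    show "summable (\<lambda>n. 3 * (real n ^ 4 * \<alpha> ^ n))"
      using summable_n4_geom[of \<alpha>] alpha by (intro summable_mult) auto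
    show "norm (expectation (f n)) \<le> 3 * (real n ^ 4 * \<alpha> ^ n)" for n
    proof -
      have "0 \<le> expectation (f n)"
        using alpha by (intro integral_nonneg_AE) (auto simp: f_def intro!: sum_nonneg divide_nonneg_pos)
      then show ?thesis using fe[of n] by simp
    qed
  qed
  have "AE \<omega> in M. summable (\<lambda>n. f n \<omega>)"
    by (rule AE_summable_exp[OF fm _ fi sm]) (use alpha in \<open>auto simp: f_def intro!: sum_nonneg divide_nonneg_pos\<close>)
  then show ?thesis
  proof eventually_elim
    case (elim \<omega>)
    have "(\<lambda>n. f n \<omega>) \<longlonglongrightarrow> 0" using elim by (rule summable_LIMSEQ_zero)
    then have "eventually (\<lambda>n. f n \<omega> < 1) sequentially" by (rule order_tendstoD) simp
    then show ?case
    proof eventually_elim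
      case (elim n)
      show ?case
      proof (intro allI impI)
        fix k assume k: "k < b ^ n"
        have an: "0 < \<alpha> ^ n" using alpha by simp
        have "(DWf W \<alpha> b n k \<omega>) ^ 4 \<le> (\<Sum>k<b^n. (DWf W \<alpha> b n k \<omega>) ^ 4)"
          using k by (intro member_le_sum) (auto simp: zero_le_even_power)
        also have "\<dots> \<le> \<alpha> ^ n" using elim an by (simp add: f_def divide_less_eq)
        also have "\<dots> = (\<beta> ^ n) ^ 4"
        proof -
          have "(\<beta> ^ n) ^ 4 = (\<beta> ^ 4) ^ n" by (simp only: power_mult[symmetric] mult.commute)
          then show ?thesis using beta(3) by simp
        qed
        finally have "\<bar>DWf W \<alpha> b n k \<omega>\<bar> ^ 4 \<le> (\<beta> ^ n) ^ 4"
          by simp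
        then show "\<bar>DWf W \<alpha> b n k \<omega>\<bar> \<le> \<beta> ^ n"
        proof -
          have "0 \<le> \<beta> ^ n" using beta by simp
          then show ?thesis using \<open>\<bar>DWf W \<alpha> b n k \<omega>\<bar> ^ 4 \<le> (\<beta> ^ n) ^ 4\<close>
            power_mono_iff[of "\<bar>DWf W \<alpha> b n k \<omega>\<bar>" "\<beta> ^ n" 4] by simp
        qed
      qed
    qed
  qed
qed

end

context wws begin

definition DX :: "nat \<Rightarrow> nat \<Rightarrow> 'a \<Rightarrow> real" where
  "DX n k \<omega> = ww_bridge W \<kappa> \<alpha> b ((real k + 1) / real b ^ n) \<omega> - ww_bridge W \<kappa> \<alpha> b (real k / real b ^ n) \<omega>"

definition QX :: "real \<Rightarrow> nat \<Rightarrow> 'a \<Rightarrow> real" where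
  "QX t n \<omega> = (\<Sum>k<Mt t n. (DX n k \<omega>)\<^sup>2)"

lemma L2_small:
  assumes t: "t \<le> 1"
  shows "L2_set (\<lambda>k. W 1 \<omega> * Kf \<kappa> \<alpha> b n k) {..<Mt t n} \<le> \<bar>W 1 \<omega>\<bar> * CK"
proof -
  have "(\<Sum>k<Mt t n. (W 1 \<omega> * Kf \<kappa> \<alpha> b n k)\<^sup>2) \<le> (\<Sum>k<b^n. (\<bar>W 1 \<omega>\<bar> * (CK * \<alpha> ^ n))\<^sup>2)"
  proof -
    have "(\<Sum>k<Mt t n. (W 1 \<omega> * Kf \<kappa> \<alpha> b n k)\<^sup>2) \<le> (\<Sum>k<Mt t n. (\<bar>W 1 \<omega>\<bar> * (CK * \<alpha> ^ n))\<^sup>2)"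
    proof (rule sum_mono)
      fix k
      have "\<bar>W 1 \<omega> * Kf \<kappa> \<alpha> b n k\<bar> \<le> \<bar>W 1 \<omega>\<bar> * (CK * \<alpha> ^ n)"
        unfolding abs_mult using K_bound by (intro mult_left_mono) auto
      then show "(W 1 \<omega> * Kf \<kappa> \<alpha> b n k)\<^sup>2 \<le> (\<bar>W 1 \<omega>\<bar> * (CK * \<alpha> ^ n))\<^sup>2"
        by (metis abs_ge_zero power2_abs power_mono)
    qed
    also have "\<dots> \<le> (\<Sum>k<b^n. (\<bar>W 1 \<omega>\<bar> * (CK * \<alpha> ^ n))\<^sup>2)"
      using Mt_le[OF t] by (intro sum_mono2) auto
    finally show ?thesis .
  qed
  also have "\<dots> = (\<bar>W 1 \<omega>\<bar> * CK)\<^sup>2 * (\<alpha> ^ n * \<alpha> ^ n * real b ^ n)"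
    by (simp add: power2_eq_square algebra_simps)
  also have "\<dots> = (\<bar>W 1 \<omega>\<bar> * CK)\<^sup>2" using coefs.ab1[OF coefs] by simp
  finally have "sqrt (\<Sum>k<Mt t n. (W 1 \<omega> * Kf \<kappa> \<alpha> b n k)\<^sup>2) \<le> sqrt ((\<bar>W 1 \<omega>\<bar> * CK)\<^sup>2)"
    by (rule real_sqrt_le_mono)
  then show ?thesis unfolding L2_set_def using CK_nn by simp
qed

lemma sqrt_Q_close:
  assumes \<omega>: "\<omega> \<in> space M" and t: "t \<le> 1"
  shows "\<bar>sqrt (QX t n \<omega>) - sqrt (QW t n \<omega>)\<bar> \<le> \<bar>W 1 \<omega>\<bar> * CK"
proof -
  have sX: "sqrt (QX t n \<omega>) = L2_set (\<lambda>k. DWf W \<alpha> b n k \<omega> + (- (W 1 \<omega> * Kf \<kappa> \<alpha> b n k))) {..<Mt t n}"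
    unfolding QX_def L2_set_def DX_def DX_eq[OF \<omega>] by simp
  have sW: "sqrt (QW t n \<omega>) = L2_set (\<lambda>k. DX n k \<omega> + W 1 \<omega> * Kf \<kappa> \<alpha> b n k) {..<Mt t n}"
    unfolding QW_def L2_set_def DX_def DX_eq[OF \<omega>] by simp
  have m: "L2_set (\<lambda>k. - (W 1 \<omega> * Kf \<kappa> \<alpha> b n k)) {..<Mt t n} = L2_set (\<lambda>k. W 1 \<omega> * Kf \<kappa> \<alpha> b n k) {..<Mt t n}"
    unfolding L2_set_def by simp
  have a: "sqrt (QX t n \<omega>) \<le> sqrt (QW t n \<omega>) + \<bar>W 1 \<omega>\<bar> * CK"
  proof -
    have "sqrt (QX t n \<omega>) \<le> L2_set (\<lambda>k. DWf W \<alpha> b n k \<omega>) {..<Mt t n} + L2_set (\<lambda>k. - (W 1 \<omega> * Kf \<kappa> \<alpha> b n k)) {..<Mt t n}"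
      unfolding sX by (rule L2_set_triangle_ineq)
    also have "L2_set (\<lambda>k. DWf W \<alpha> b n k \<omega>) {..<Mt t n} = sqrt (QW t n \<omega>)"
      unfolding QW_def L2_set_def by simp
    finally show ?thesis using L2_small[OF t, of \<omega> n] m by simp
  qed
  have c: "sqrt (QW t n \<omega>) \<le> sqrt (QX t n \<omega>) + \<bar>W 1 \<omega>\<bar> * CK"
  proof -
    have "sqrt (QW t n \<omega>) \<le> L2_set (\<lambda>k. DX n k \<omega>) {..<Mt t n} + L2_set (\<lambda>k. W 1 \<omega> * Kf \<kappa> \<alpha> b n k) {..<Mt t n}"
      unfolding sW by (rule L2_set_triangle_ineq)
    also have "L2_set (\<lambda>k. DX n k \<omega>) {..<Mt t n} = sqrt (QX t n \<omega>)"
      unfolding QX_def L2_set_def by simp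
    finally show ?thesis using L2_small[OF t, of \<omega> n] by simp
  qed
  show ?thesis using a c by linarith
qed

lemma QX_lim_from_QW:
  assumes \<omega>: "\<omega> \<in> space M" and t: "0 \<le> t" "t \<le> 1"
    and lim: "(\<lambda>n. QW t n \<omega> / real n) \<longlonglongrightarrow> t"
  shows "(\<lambda>n. QX t n \<omega> / real n) \<longlonglongrightarrow> t"
proof -
  define E where "E = \<bar>W 1 \<omega>\<bar> * CK"
  have sW: "(\<lambda>n. sqrt (QW t n \<omega> / real n)) \<longlonglongrightarrow> sqrt t" by (intro tendsto_real_sqrt lim)
  have close: "\<bar>sqrt (QX t n \<omega> / real n) - sqrt (QW t n \<omega> / real n)\<bar> \<le> E * (1 / sqrt (real n))" for n
  proof (cases "n = 0")
    case True then show ?thesis by simp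
  next
    case False
    have "sqrt (QX t n \<omega> / real n) - sqrt (QW t n \<omega> / real n) = (sqrt (QX t n \<omega>) - sqrt (QW t n \<omega>)) / sqrt (real n)"
      by (simp add: real_sqrt_divide diff_divide_distrib)
    then show ?thesis using sqrt_Q_close[OF \<omega> t(2), of n] False
      by (simp add: E_def abs_div divide_right_mono)
  qed
  have z: "(\<lambda>n. E * (1 / sqrt (real n))) \<longlonglongrightarrow> E * 0"
  proof (intro tendsto_mult tendsto_const)
    have "(\<lambda>n. sqrt (1 / real n)) \<longlonglongrightarrow> sqrt 0" by (intro tendsto_real_sqrt lim_const_over_n)
    then show "(\<lambda>n. 1 / sqrt (real n)) \<longlonglongrightarrow> 0" by (simp add: real_sqrt_divide)
  qed
  have "(\<lambda>n. sqrt (QX t n \<omega> / real n) - sqrt (QW t n \<omega> / real n)) \<longlonglongrightarrow> 0"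
  proof (rule tendsto_rabs_zero_cancel, rule tendsto_sandwich[of "\<lambda>_. 0" _ _ "\<lambda>n. E * (1 / sqrt (real n))"])
    show "\<forall>\<^sub>F n in sequentially. 0 \<le> \<bar>sqrt (QX t n \<omega> / real n) - sqrt (QW t n \<omega> / real n)\<bar>" by simp
    show "\<forall>\<^sub>F n in sequentially. \<bar>sqrt (QX t n \<omega> / real n) - sqrt (QW t n \<omega> / real n)\<bar> \<le> E * (1 / sqrt (real n))"
      using close by simp
  qed (use z in auto)
  then have "(\<lambda>n. (sqrt (QX t n \<omega> / real n) - sqrt (QW t n \<omega> / real n)) + sqrt (QW t n \<omega> / real n)) \<longlonglongrightarrow> 0 + sqrt t"
    by (intro tendsto_add sW)
  then have "(\<lambda>n. sqrt (QX t n \<omega> / real n)) \<longlonglongrightarrow> sqrt t" by simp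
  then have "(\<lambda>n. (sqrt (QX t n \<omega> / real n))\<^sup>2) \<longlonglongrightarrow> (sqrt t)\<^sup>2" by (intro tendsto_power)
  moreover have "(sqrt (QX t n \<omega> / real n))\<^sup>2 = QX t n \<omega> / real n" for n
    by (simp add: QX_def sum_nonneg)
  ultimately show ?thesis using t by simp
qed

end

lemma powr_two_abs: "\<bar>x::real\<bar> powr 2 = x\<^sup>2"
proof (cases "x = 0")
  case False
  then have "\<bar>x\<bar> powr real 2 = \<bar>x\<bar> ^ 2" by (intro powr_realpow) simp
  then show ?thesis by simp
qed simp

lemma pow_powr: "0 < (x::real) \<Longrightarrow> (x ^ n) powr r = (x powr r) ^ n"
proof -
  assume x: "0 < x"
  have "(x ^ n) powr r = (x powr real n) powr r" using x by (simp add: powr_realpow)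
  also have "\<dots> = x powr (real n * r)" by (simp add: powr_powr)
  also have "\<dots> = (x powr r) powr real n" by (simp add: powr_powr mult.commute)
  also have "\<dots> = (x powr r) ^ n" using x by (simp add: powr_realpow)
  finally show ?thesis .
qed

lemma mono_ext:
  fixes g :: "real \<Rightarrow> nat \<Rightarrow> real"
  assumes mono: "\<And>s t n. 0 \<le> s \<Longrightarrow> s \<le> t \<Longrightarrow> t \<le> 1 \<Longrightarrow> g s n \<le> g t n"
    and lim: "\<forall>q\<in>\<rat> \<inter> {0..1}. (\<lambda>n. g q n / real n) \<longlonglongrightarrow> q"
    and t: "0 < t" "t \<le> 1"
  shows "(\<lambda>n. g t n / real n) \<longlonglongrightarrow> t"
proof (rule order_tendstoI)
  fix a assume a: "a < t"
  obtain q where q: "q \<in> \<rat>" "max a 0 < q" "q < t" using Rats_dense_in_real[of "max a 0" t] a t by auto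
  have qin: "q \<in> \<rat> \<inter> {0..1}" using q t by auto
  have "eventually (\<lambda>n. a < g q n / real n) sequentially"
    using lim qin q by (intro order_tendstoD(1)) auto
  then show "eventually (\<lambda>n. a < g t n / real n) sequentially"
  proof eventually_elim
    case (elim n)
    have "g q n / real n \<le> g t n / real n"
      using mono[of q t n] q t by (intro divide_right_mono) auto
    then show ?case using elim by simp
  qed
next
  fix a assume a: "t < a"
  obtain q where q: "q \<in> \<rat> \<inter> {0..1}" "t \<le> q" "q < a"
  proof (cases "t < 1")
    case True
    obtain q where "q \<in> \<rat>" "t < q" "q < min a 1" using Rats_dense_in_real[of t "min a 1"] a True by auto
    then show ?thesis using that[of q] t by auto
  next
    case False
    then have "t = 1" using t by simp
    then show ?thesis using that[of 1] a by auto
  qed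
  have "eventually (\<lambda>n. g q n / real n < a) sequentially"
    using lim q by (intro order_tendstoD(2)) auto
  then show "eventually (\<lambda>n. g t n / real n < a) sequentially"
  proof eventually_elim
    case (elim n)
    have "g t n / real n \<le> g q n / real n"
      using mono[of t q n] q t by (intro divide_right_mono) auto
    then show ?case using elim by simp
  qed
qed

context wws begin

lemma Mt_mono: "s \<le> t \<Longrightarrow> Mt s n \<le> Mt t n"
  unfolding Mt_def by (intro nat_mono floor_mono mult_right_mono) auto

lemma QX_mono: "s \<le> t \<Longrightarrow> QX s n \<omega> \<le> QX t n \<omega>"
  unfolding QX_def using Mt_mono by (intro sum_mono2) auto

lemma DX_small:
  assumes \<omega>: "\<omega> \<in> space M"
    and ev: "eventually (\<lambda>n. \<forall>k<b^n. \<bar>DWf W \<alpha> b n k \<omega>\<bar> \<le> \<beta> ^ n) sequentially"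
  shows "eventually (\<lambda>n. \<forall>k<b^n. \<bar>DX n k \<omega>\<bar> \<le> (1 + \<bar>W 1 \<omega>\<bar> * CK) * \<beta> ^ n) sequentially"
  using ev
proof eventually_elim
  case (elim n)
  show ?case
  proof (intro allI impI)
    fix k assume k: "k < b ^ n"
    have ab: "\<alpha> ^ n \<le> \<beta> ^ n"
    proof -
      have "\<beta> ^ 4 \<le> \<beta> ^ 1" using beta by (intro power_decreasing) auto
      then have "\<alpha> \<le> \<beta>" using beta(3) by simp
      then show ?thesis using alpha by (intro power_mono) auto
    qed
    have "\<bar>DX n k \<omega>\<bar> \<le> \<bar>DWf W \<alpha> b n k \<omega>\<bar> + \<bar>W 1 \<omega>\<bar> * \<bar>Kf \<kappa> \<alpha> b n k\<bar>"
      unfolding DX_def DX_eq[OF \<omega>] by (simp add: abs_mult[symmetric] abs_triangle_ineq4)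
    also have "\<dots> \<le> \<beta> ^ n + \<bar>W 1 \<omega>\<bar> * (CK * \<beta> ^ n)"
    proof -
      have "\<bar>Kf \<kappa> \<alpha> b n k\<bar> \<le> CK * \<beta> ^ n"
      proof -
        have "CK * \<alpha> ^ n \<le> CK * \<beta> ^ n" using ab CK_nn by (rule mult_left_mono)
        then show ?thesis using K_bound[of n k] by linarith
      qed
      then show ?thesis using elim k by (intro add_mono mult_left_mono) auto
    qed
    finally show "\<bar>DX n k \<omega>\<bar> \<le> (1 + \<bar>W 1 \<omega>\<bar> * CK) * \<beta> ^ n" by (simp add: algebra_simps)
  qed
qed

end

context wws begin

lemma nf: "nat \<lfloor>real b ^ n\<rfloor> = b ^ n"
proof -
  have "real b ^ n = real (b ^ n)" by simp
  then show ?thesis by (simp only: floor_of_nat nat_int)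
qed

lemma Mt1: "Mt 1 n = b ^ n"
  unfolding Mt_def using nf by simp

lemma pvar_eq: "pvar_sum (\<lambda>s. ww_bridge W \<kappa> \<alpha> b s \<omega>) b p 1 n = (\<Sum>k<b^n. \<bar>DX n k \<omega>\<bar> powr p)"
  unfolding pvar_sum_def DX_def using nf by simp

lemma QX1: "QX 1 n \<omega> = (\<Sum>k<b^n. (DX n k \<omega>)\<^sup>2)"
  unfolding QX_def Mt1 ..

lemma pvar_inf:
  assumes H1: "(\<lambda>n. QX 1 n \<omega> / real n) \<longlonglongrightarrow> 1"
    and Hs: "eventually (\<lambda>n. \<forall>k<b^n. \<bar>DX n k \<omega>\<bar> \<le> C * \<beta> ^ n) sequentially"
    and p: "0 < p" "p \<le> 2"
  shows "has_pvariation (\<lambda>s. ww_bridge W \<kappa> \<alpha> b s \<omega>) b p 1 \<infinity>"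
proof -
  have "(\<lambda>n. C * \<beta> ^ n) \<longlonglongrightarrow> C * 0"
    using beta by (intro tendsto_mult tendsto_const LIMSEQ_power_zero) auto
  then have e1: "eventually (\<lambda>n. C * \<beta> ^ n < 1) sequentially" by (intro order_tendstoD(2)) auto
  have e2: "eventually (\<lambda>n. 1/2 < QX 1 n \<omega> / real n) sequentially"
    using H1 by (intro order_tendstoD(1)) auto
  have lb: "eventually (\<lambda>n. real n / 2 \<le> pvar_sum (\<lambda>s. ww_bridge W \<kappa> \<alpha> b s \<omega>) b p 1 n) sequentially"
    using e1 e2 Hs eventually_gt_at_top[of "0::nat"]
  proof eventually_elim
    case (elim n)
    have "real n / 2 \<le> QX 1 n \<omega>" using elim by (simp add: field_simps)
    also have "\<dots> \<le> (\<Sum>k<b^n. \<bar>DX n k \<omega>\<bar> powr p)"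
      unfolding QX1
    proof (rule sum_mono)
      fix k assume "k \<in> {..<b^n}"
      then have x1: "\<bar>DX n k \<omega>\<bar> \<le> 1" using elim by force
      have "\<bar>DX n k \<omega>\<bar> powr 2 \<le> \<bar>DX n k \<omega>\<bar> powr p"
        using x1 p by (intro powr_mono') auto
      then show "(DX n k \<omega>)\<^sup>2 \<le> \<bar>DX n k \<omega>\<bar> powr p" by (simp add: powr_two_abs)
    qed
    finally show ?case by (simp add: pvar_eq)
  qed
  show ?thesis unfolding has_pvariation_def tendsto_PInfty
  proof
    fix r :: real
    have "eventually (\<lambda>n. 2 * r < real n) sequentially"
      by (rule eventually_sequentiallyI[of "nat \<lceil>2 * r\<rceil> + 1"]) linarith
    then show "eventually (\<lambda>n. ereal r < ereal (pvar_sum (\<lambda>s. ww_bridge W \<kappa> \<alpha> b s \<omega>) b p 1 n)) sequentially"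
      using lb by eventually_elim simp
  qed
qed

lemma pvar_zero:
  assumes H1: "(\<lambda>n. QX 1 n \<omega> / real n) \<longlonglongrightarrow> 1"
    and Hs: "eventually (\<lambda>n. \<forall>k<b^n. \<bar>DX n k \<omega>\<bar> \<le> C * \<beta> ^ n) sequentially"
    and C: "0 < C" and p: "2 < p"
  shows "has_pvariation (\<lambda>s. ww_bridge W \<kappa> \<alpha> b s \<omega>) b p 1 0"
proof -
  define \<theta> where "\<theta> = \<beta> powr (p - 2)"
  have th: "0 < \<theta>" "\<theta> < 1"
  proof -
    show "0 < \<theta>" using beta by (simp add: \<theta>_def)
    have "\<beta> powr (p - 2) < 1 powr (p - 2)" using beta p by (intro powr_less_mono2) auto
    then show "\<theta> < 1" by (simp add: \<theta>_def)
  qed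
  have e2: "eventually (\<lambda>n. QX 1 n \<omega> / real n < 2) sequentially"
    using H1 by (intro order_tendstoD(2)) auto
  have ub: "eventually (\<lambda>n. pvar_sum (\<lambda>s. ww_bridge W \<kappa> \<alpha> b s \<omega>) b p 1 n \<le> 2 * C powr (p - 2) * (real n * \<theta> ^ n)) sequentially"
    using e2 Hs eventually_gt_at_top[of "0::nat"]
  proof eventually_elim
    case (elim n)
    define m where "m = C * \<beta> ^ n"
    have m: "0 < m" using C beta by (simp add: m_def)
    have "(\<Sum>k<b^n. \<bar>DX n k \<omega>\<bar> powr p) \<le> (\<Sum>k<b^n. (DX n k \<omega>)\<^sup>2 * m powr (p - 2))"
    proof (rule sum_mono)
      fix k assume "k \<in> {..<b^n}"
      then have xm: "\<bar>DX n k \<omega>\<bar> \<le> m" using elim by (force simp: m_def)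
      show "\<bar>DX n k \<omega>\<bar> powr p \<le> (DX n k \<omega>)\<^sup>2 * m powr (p - 2)"
      proof (cases "DX n k \<omega> = 0")
        case True then show ?thesis by simp
      next
        case False
        have "\<bar>DX n k \<omega>\<bar> powr p = \<bar>DX n k \<omega>\<bar> powr 2 * \<bar>DX n k \<omega>\<bar> powr (p - 2)"
        proof -
          have e: "2 + (p - 2) = p" by simp
          have "\<bar>DX n k \<omega>\<bar> powr p = \<bar>DX n k \<omega>\<bar> powr (2 + (p - 2))" by (simp only: e)
          also have "\<dots> = \<bar>DX n k \<omega>\<bar> powr 2 * \<bar>DX n k \<omega>\<bar> powr (p - 2)" by (rule powr_add)
          finally show ?thesis .
        qed
        also have "\<dots> \<le> \<bar>DX n k \<omega>\<bar> powr 2 * m powr (p - 2)"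
          using xm p by (intro mult_left_mono powr_mono2) auto
        finally show ?thesis by (simp add: powr_two_abs)
      qed
    qed
    also have "\<dots> = QX 1 n \<omega> * m powr (p - 2)"
      unfolding QX1 by (simp add: sum_distrib_right)
    also have "\<dots> \<le> (2 * real n) * m powr (p - 2)"
      using elim by (intro mult_right_mono) (auto simp: field_simps)
    also have "m powr (p - 2) = C powr (p - 2) * \<theta> ^ n"
      unfolding m_def \<theta>_def using C beta by (simp add: powr_mult pow_powr)
    finally show ?case by (simp add: pvar_eq algebra_simps)
  qed
  have lb: "eventually (\<lambda>n. 0 \<le> pvar_sum (\<lambda>s. ww_bridge W \<kappa> \<alpha> b s \<omega>) b p 1 n) sequentially"
    by (simp add: pvar_eq sum_nonneg)
  have "(\<lambda>n. 2 * C powr (p - 2) * (real n * \<theta> ^ n)) \<longlonglongrightarrow> 2 * C powr (p - 2) * 0"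
    using th by (intro tendsto_mult tendsto_const powser_times_n_limit_0) auto
  then have hz: "(\<lambda>n. 2 * C powr (p - 2) * (real n * \<theta> ^ n)) \<longlonglongrightarrow> 0" by simp
  have "(\<lambda>n. pvar_sum (\<lambda>s. ww_bridge W \<kappa> \<alpha> b s \<omega>) b p 1 n) \<longlonglongrightarrow> 0"
    by (rule tendsto_sandwich[OF lb ub tendsto_const hz])
  then show ?thesis unfolding has_pvariation_def zero_ereal_def by (rule tendsto_ereal)
qed

theorem main:
  "AE \<omega> in M.
     (\<forall>t\<in>{0<..1}.
        (\<lambda>n. (1 / real n) *
           (\<Sum>k<nat \<lfloor>t * real b ^ n\<rfloor>.
              (ww_bridge W \<kappa> \<alpha> b ((real k + 1) / real b ^ n) \<omega>
               - ww_bridge W \<kappa> \<alpha> b (real k / real b ^ n) \<omega>)\<^sup>2))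
        \<longlonglongrightarrow> t) \<and>
     (\<forall>p. 0 < p \<and> p \<le> 2 \<longrightarrow> has_pvariation (\<lambda>s. ww_bridge W \<kappa> \<alpha> b s \<omega>) b p 1 \<infinity>) \<and>
     (\<forall>p. 2 < p \<longrightarrow> has_pvariation (\<lambda>s. ww_bridge W \<kappa> \<alpha> b s \<omega>) b p 1 0)"
proof -
  have cQ: "countable (\<rat> \<inter> {0..1::real})" by (intro countable_Int1 countable_rat)
  have A1: "AE \<omega> in M. \<forall>q\<in>\<rat> \<inter> {0..1}. (\<lambda>n. QW q n \<omega> / real n) \<longlonglongrightarrow> q"
    unfolding AE_ball_countable[OF cQ] by (intro ballI AE_QW_lim) auto
  show ?thesis
    using A1 AE_DW_small AE_space
  proof eventually_elim
    case (elim \<omega>)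
    have QXq: "\<forall>q\<in>\<rat> \<inter> {0..1}. (\<lambda>n. QX q n \<omega> / real n) \<longlonglongrightarrow> q"
      using elim(1) QX_lim_from_QW[OF elim(3)] by auto
    have allt: "(\<lambda>n. QX t n \<omega> / real n) \<longlonglongrightarrow> t" if "t \<in> {0<..1}" for t
      using that by (intro mono_ext[where g="\<lambda>t n. QX t n \<omega>"] QX_mono QXq) auto
    have H1: "(\<lambda>n. QX 1 n \<omega> / real n) \<longlonglongrightarrow> 1" using allt[of 1] by simp
    have Hs: "eventually (\<lambda>n. \<forall>k<b^n. \<bar>DX n k \<omega>\<bar> \<le> (1 + \<bar>W 1 \<omega>\<bar> * CK) * \<beta> ^ n) sequentially"
      by (rule DX_small[OF elim(3) elim(2)])
    have Cp: "0 < 1 + \<bar>W 1 \<omega>\<bar> * CK" using CK_nn by (simp add: add_pos_nonneg)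
    have c1: "\<forall>t\<in>{0<..1}. (\<lambda>n. (1 / real n) *
           (\<Sum>k<nat \<lfloor>t * real b ^ n\<rfloor>.
              (ww_bridge W \<kappa> \<alpha> b ((real k + 1) / real b ^ n) \<omega>
               - ww_bridge W \<kappa> \<alpha> b (real k / real b ^ n) \<omega>)\<^sup>2)) \<longlonglongrightarrow> t"
      using allt by (simp add: QX_def DX_def Mt_def)
    show ?case
      using c1 pvar_inf[OF H1 Hs] pvar_zero[OF H1 Hs Cp] by blast
  qed
qed

end

theorem theorem2p4:
  fixes M :: "'a measure" and W :: "real \<Rightarrow> 'a \<Rightarrow> real" and \<kappa> :: "real \<Rightarrow> real"
    and \<tau> \<alpha> :: real and b :: nat
  assumes BM: "brownian_motion M W"
    and kappa_range: "\<forall>t\<in>{0..1}. \<kappa> t \<in> {0..1}"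
    and kappa0: "\<kappa> 0 = 0" and kappa1: "\<kappa> 1 = 1"
    and tau: "1/2 < \<tau>" "\<tau> \<le> 1"
    and kappa_hoelder: "hoelder_on01 \<tau> \<kappa>"
    and alpha: "0 < \<alpha>" "\<alpha> < 1"
    and b: "2 \<le> b"
    and crit: "\<alpha>\<^sup>2 * real b = 1"
  shows "AE \<omega> in M.
     (\<forall>t\<in>{0<..1}.
        (\<lambda>n. (1 / real n) *
           (\<Sum>k<nat \<lfloor>t * real b ^ n\<rfloor>.
              (ww_bridge W \<kappa> \<alpha> b ((real k + 1) / real b ^ n) \<omega>
               - ww_bridge W \<kappa> \<alpha> b (real k / real b ^ n) \<omega>)\<^sup>2))
        \<longlonglongrightarrow> t) \<and>
     (\<forall>p. 0 < p \<and> p \<le> 2 \<longrightarrow> has_pvariation (\<lambda>s. ww_bridge W \<kappa> \<alpha> b s \<omega>) b p 1 \<infinity>) \<and>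
     (\<forall>p. 2 < p \<longrightarrow> has_pvariation (\<lambda>s. ww_bridge W \<kappa> \<alpha> b s \<omega>) b p 1 0)"
proof -
  interpret wws M W \<kappa> \<tau> \<alpha> b
    unfolding wws_def using assms by auto
  show ?thesis by (rule main)
qed

end
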